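(* Let $\phi:\mathbb{R}^{n\times n}\to\mathbb{R}$ be twice differentiable, $L$-gradient Lipschitz and $(\mu,2r)$-restricted strongly convex, let $M^\star=\arg\min\phi$ satisfy $M^\star\succeq0$ and $\operatorname{rank}(M^\star)\le r$, and let $f(X)=\phi(XX^T)$. Let $X\in\mathbb{R}^{n\times r}$ with $XX^T\ne M^\star$ have singular value decomposition $X=\sum_{i=1}^r\sigma_iu_iv_i^T$ with $\|u_i\|=\|v_i\|=1$ and $\sigma_1\ge\cdots\ge\sigma_r$, and let $\eta\ge0$ with $X^TX+\eta I$ positive definite. Then \[ \frac{\|\nabla f(X)\|_{X,\eta}^*}{\|XX^T-M^\star\|_F}\ge\max_{k\in\{1,\dots,r\}}\frac{\mu+L}{\sqrt2}\cdot\frac{\cos\theta_k-\delta}{\sqrt{1+\eta/\lambda_k(XX^T)}}, \] where $\delta=\frac{L-\mu}{L+\mu}$ and \[ \cos\theta_k=\max_{Y\in\mathbb{R}^{n\times r}}\frac{\langle XX^T-M^\star,X_kY^T+YX_k^T\rangle}{\|XX^T-M^\star\|_F\,\|X_kY^T+YX_k^T\|_F},\qquad X_k=\sum_{i=1}^k\sigma_iu_iv_i^T. \]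
   Context: $\phi$ is $L$-gradient Lipschitz if $\|\nabla\phi(M+E)-\nabla\phi(M)\|_F\le L\|E\|_F$ for all $M,E$; $(\mu,k)$-restricted strongly convex if $\langle\nabla^2\phi(M)[E],E\rangle\ge\mu\|E\|_F^2$ for all $M,E\in\mathbb{R}^{n\times n}$ of rank at most $k$. Dual local norm $\|V\|_{X,\eta}^*=\|V(X^TX+\eta I)^{-1/2}\|_F$. Eigenvalues ordered decreasingly. *)

theory Defs
  imports "HOL-Analysis.Analysis" "HOL-Computational_Algebra.Polynomial"
begin

(* Gradient w.r.t. the Frobenius (= componentwise) inner product on matrices *)
definition grad :: "('a::real_inner \<Rightarrow> real) \<Rightarrow> 'a \<Rightarrow> 'a" where
  "grad f x = (THE g. (f has_derivative (\<lambda>h. g \<bullet> h)) (at x))"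

definition twice_differentiable :: "('a::real_inner \<Rightarrow> real) \<Rightarrow> bool" where
  "twice_differentiable f \<longleftrightarrow>
     (\<forall>x. (f has_derivative (\<lambda>h. grad f x \<bullet> h)) (at x)) \<and>
     (\<forall>x. grad f differentiable (at x))"

definition hess :: "('a::real_inner \<Rightarrow> real) \<Rightarrow> 'a \<Rightarrow> 'a \<Rightarrow> 'a" where
  "hess f x = frechet_derivative (grad f) (at x)"

definition grad_lipschitz :: "real \<Rightarrow> (real^'n^'n \<Rightarrow> real) \<Rightarrow> bool" where
  "grad_lipschitz L \<phi> \<longleftrightarrow>
     (\<forall>M E. norm (grad \<phi> (M + E) - grad \<phi> M) \<le> L * norm E)"

definition restricted_strongly_convex :: "real \<Rightarrow> nat \<Rightarrow> (real^'n^'n \<Rightarrow> real) \<Rightarrow> bool" where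
  "restricted_strongly_convex \<mu> k \<phi> \<longleftrightarrow>
     (\<forall>M E. rank M \<le> k \<and> rank E \<le> k \<longrightarrow> hess \<phi> M E \<bullet> E \<ge> \<mu> * (norm E)\<^sup>2)"

definition psd :: "real^'n^'n \<Rightarrow> bool" where
  "psd A \<longleftrightarrow> transpose A = A \<and> (\<forall>x. x \<bullet> (A *v x) \<ge> 0)"

definition pd :: "real^'n^'n \<Rightarrow> bool" where
  "pd A \<longleftrightarrow> transpose A = A \<and> (\<forall>x. x \<noteq> 0 \<longrightarrow> x \<bullet> (A *v x) > 0)"

definition inv_sqrt :: "real^'n^'n \<Rightarrow> real^'n^'n" where
  "inv_sqrt P = (THE S. psd S \<and> S ** S = matrix_inv P)"

definition dual_local_norm :: "real^'r^'n \<Rightarrow> real^'r^'n \<Rightarrow> real \<Rightarrow> real" where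
  "dual_local_norm V X \<eta> = norm (V ** inv_sqrt (transpose X ** X + \<eta> *\<^sub>R mat 1))"

definition charpoly :: "real^'n^'n \<Rightarrow> real poly" where
  "charpoly A = det (\<chi> i j. (if i = j then [:0, 1:] else 0) - [:A $ i $ j:])"

(* k-th largest eigenvalue (k >= 1), counted with multiplicity *)
definition eigval :: "nat \<Rightarrow> real^'n^'n \<Rightarrow> real" where
  "eigval k A = rev (sorted_list_of_multiset (proots (charpoly A))) ! (k - 1)"

definition outer :: "real^'n \<Rightarrow> real^'m \<Rightarrow> real^'m^'n" where
  "outer u v = (\<chi> i j. u $ i * v $ j)"

end

theory Submission
  imports Defs
begin
lemma sum_swap3: "(\<Sum>i\<in>A. \<Sum>j\<in>B. \<Sum>k\<in>C. f i j k) = (\<Sum>j\<in>B. \<Sum>k\<in>C. \<Sum>i\<in>A. f i j k)"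
proof -
  have "(\<Sum>i\<in>A. \<Sum>j\<in>B. \<Sum>k\<in>C. f i j k) = (\<Sum>j\<in>B. \<Sum>i\<in>A. \<Sum>k\<in>C. f i j k)"
    by (rule sum.swap)
  also have "\<dots> = (\<Sum>j\<in>B. \<Sum>k\<in>C. \<Sum>i\<in>A. f i j k)"
    by (rule sum.cong, simp, rule sum.swap)
  finally show ?thesis .
qed

lemma mat_inner: "(A::real^'c^'r) \<bullet> B = (\<Sum>i\<in>UNIV. \<Sum>j\<in>UNIV. A$i$j * B$i$j)"
  by (simp add: inner_vec_def)

lemma inner_mm_right: "(A::real^'c^'r) \<bullet> ((B::real^'k^'r) ** C) = (transpose B ** A) \<bullet> C"
  apply (simp add: mat_inner matrix_matrix_mult_def transpose_def sum_distrib_left sum_distrib_right)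
  apply (rule trans[OF sum_swap3])
  apply (rule trans[OF sum.swap])
  by (simp add: algebra_simps)

lemma inner_mm_left: "(A::real^'c^'r) \<bullet> ((B::real^'k^'r) ** C) = (A ** transpose C) \<bullet> B"
  apply (simp add: mat_inner matrix_matrix_mult_def transpose_def sum_distrib_left sum_distrib_right)
  apply (rule sum.cong, simp)
  apply (subst sum.swap) apply (rule sum.cong, simp)
  by (simp add: algebra_simps)

lemma inner_transpose_both: "transpose (A::real^'c^'r) \<bullet> transpose B = A \<bullet> B"
  apply (simp add: mat_inner transpose_def)
  by (subst sum.swap) simp

lemma inner_transpose_right: "(A::real^'c^'r) \<bullet> transpose B = transpose A \<bullet> B"
  by (metis inner_transpose_both transpose_transpose)

lemma norm_transpose: "norm (transpose (A::real^'c^'r)) = norm A"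
  by (simp add: norm_eq_sqrt_inner inner_transpose_both)

lemma outer_inner: "outer (u::real^'n) (v::real^'m) \<bullet> outer a b = (u \<bullet> a) * (v \<bullet> b)"
  apply (simp add: outer_def mat_inner inner_vec_def sum_product)
  by (simp add: algebra_simps)

lemma outer_mult: "outer (u::real^'n) (v::real^'m) ** outer a (b::real^'k) = (v \<bullet> a) *\<^sub>R outer u b"
  by (simp add: outer_def matrix_matrix_mult_def inner_vec_def vec_eq_iff sum_distrib_left sum_distrib_right algebra_simps)

lemma transpose_outer: "transpose (outer u v) = outer v u"
  by (simp add: outer_def transpose_def vec_eq_iff)

lemma mult_outer: "(M::real^'n^'k) ** outer u (v::real^'m) = outer (M *v u) v"
  by (simp add: outer_def matrix_matrix_mult_def matrix_vector_mult_def vec_eq_iff sum_distrib_right sum_distrib_left algebra_simps)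

lemma outer_mult_right: "outer u (v::real^'n) ** (M::real^'m^'n) = outer u (transpose M *v v)"
  by (simp add: outer_def matrix_matrix_mult_def matrix_vector_mult_def transpose_def vec_eq_iff sum_distrib_left algebra_simps)

lemma outer_mv: "outer u (v::real^'n) *v x = (v \<bullet> x) *\<^sub>R u"
  by (simp add: outer_def matrix_vector_mult_def inner_vec_def vec_eq_iff sum_distrib_left algebra_simps)

lemma outer_scaleR_left: "outer (c *\<^sub>R u) v = c *\<^sub>R outer u v"
  by (simp add: outer_def vec_eq_iff)

lemma outer_scaleR_right: "outer u (c *\<^sub>R v) = c *\<^sub>R outer u v"
  by (simp add: outer_def vec_eq_iff)

lemma outer_add_left: "outer (a + b) v = outer a v + outer b v"
  by (simp add: outer_def vec_eq_iff algebra_simps)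

lemma outer_sum_left: "outer (\<Sum>i\<in>I. a i) v = (\<Sum>i\<in>I. outer (a i) v)"
  by (induction I rule: infinite_finite_induct) (auto simp: outer_def vec_eq_iff algebra_simps)

lemma outer_zero_left[simp]: "outer 0 v = 0" and outer_zero_right[simp]: "outer u 0 = 0"
  by (simp_all add: outer_def vec_eq_iff)

lemma norm_outer: "norm (outer (u::real^'n) (v::real^'m)) = norm u * norm v"
proof -
  have "norm (outer u v) ^ 2 = (norm u * norm v)^2"
    by (simp add: power2_norm_eq_inner outer_inner power_mult_distrib)
  thus ?thesis by (simp add: power2_eq_iff_nonneg)
qed

lemma transpose_sum: "transpose (\<Sum>i\<in>I. A i) = (\<Sum>i\<in>I. transpose (A i))"
  by (induction I rule: infinite_finite_induct) (auto simp: transpose_def vec_eq_iff)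

lemma transpose_scaleR: "transpose (c *\<^sub>R A) = c *\<^sub>R transpose A"
  by (simp add: transpose_def vec_eq_iff)

lemma transpose_add: "transpose (A + B) = transpose A + transpose B"
  by (simp add: transpose_def vec_eq_iff)

lemma transpose_diff: "transpose (A - B) = transpose A - transpose (B::real^'c^'r)"
  by (simp add: transpose_def vec_eq_iff)

lemma mm_add_rdistrib: "((A::real^'k^'r) + B) ** (C::real^'c^'k) = A ** C + B ** C"
  by (simp add: matrix_matrix_mult_def vec_eq_iff sum.distrib algebra_simps)

lemma mm_diff_rdistrib: "((A::real^'k^'r) - B) ** (C::real^'c^'k) = A ** C - B ** C"
  by (simp add: matrix_matrix_mult_def vec_eq_iff sum_subtractf algebra_simps)

lemma mm_diff_ldistrib: "(C::real^'r^'c) ** ((A::real^'k^'r) - B) = C ** A - C ** B"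
  by (simp add: matrix_matrix_mult_def vec_eq_iff sum_subtractf algebra_simps)

lemma mm_sum_left: "(\<Sum>i\<in>I. A i) ** (B::real^'c^'k) = (\<Sum>i\<in>I. A i ** B)"
  by (induction I rule: infinite_finite_induct) (auto simp: mm_add_rdistrib)

lemma mm_sum_right: "(B::real^'c^'k) ** (\<Sum>i\<in>I. A i) = (\<Sum>i\<in>I. B ** A i)"
  by (induction I rule: infinite_finite_induct) (auto simp: matrix_add_ldistrib)

lemma mm_scaleR_left: "(c *\<^sub>R A) ** (B::real^'c^'k) = c *\<^sub>R (A ** B)"
  by (simp add: matrix_matrix_mult_def vec_eq_iff sum_distrib_left algebra_simps)

lemma mm_scaleR_right: "(A::real^'k^'r) ** (c *\<^sub>R B) = c *\<^sub>R (A ** B)"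
  by (simp add: matrix_matrix_mult_def vec_eq_iff sum_distrib_left algebra_simps)

lemma mv_sum_left: "(\<Sum>i\<in>I. A i) *v (x::real^'c) = (\<Sum>i\<in>I. A i *v x)"
  by (induction I rule: infinite_finite_induct) (auto simp: matrix_vector_mult_add_rdistrib)

definition orthonormal_on :: "nat set \<Rightarrow> (nat \<Rightarrow> 'a::real_inner) \<Rightarrow> bool" where
  "orthonormal_on I w \<longleftrightarrow> (\<forall>i\<in>I. \<forall>j\<in>I. w i \<bullet> w j = (if i = j then 1 else 0))"

lemma orthonormal_on_subset: "orthonormal_on I w \<Longrightarrow> J \<subseteq> I \<Longrightarrow> orthonormal_on J w"
  unfolding orthonormal_on_def by blast

lemma mv_scaleR_left: "(c *\<^sub>R (A::real^'m^'n)) *v x = c *\<^sub>R (A *v x)"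
  by (simp add: matrix_vector_mult_def vec_eq_iff sum_distrib_left algebra_simps)

lemma sum_delta_inner:
  assumes "orthonormal_on I w" "finite I" "j \<in> I"
  shows "(\<Sum>i\<in>I. c i * (w i \<bullet> w j)) = c j"
proof -
  have "(\<Sum>i\<in>I. c i * (w i \<bullet> w j)) = (\<Sum>i\<in>I. if i = j then c i else 0)"
    using assms by (intro sum.cong) (auto simp: orthonormal_on_def)
  thus ?thesis using assms by simp
qed

lemma sum_delta_inner':
  assumes "orthonormal_on I w" "finite I" "j \<in> I"
  shows "(\<Sum>i\<in>I. c i *\<^sub>R (w j \<bullet> w i) *\<^sub>R (M i :: 'b::real_vector)) = c j *\<^sub>R M j"
proof -
  have "(\<Sum>i\<in>I. c i *\<^sub>R (w j \<bullet> w i) *\<^sub>R M i) = (\<Sum>i\<in>I. if i = j then c j *\<^sub>R M j else 0)"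
    using assms by (intro sum.cong) (auto simp: orthonormal_on_def)
  thus ?thesis using assms by simp
qed

lemma norm_sum_outer:
  fixes a :: "nat \<Rightarrow> real^'n" and w :: "nat \<Rightarrow> real^'m"
  assumes "orthonormal_on I w" "finite I"
  shows "(norm (\<Sum>i\<in>I. outer (a i) (w i)))^2 = (\<Sum>i\<in>I. (norm (a i))^2)"
proof -
  have "(norm (\<Sum>i\<in>I. outer (a i) (w i)))^2 = (\<Sum>i\<in>I. \<Sum>j\<in>I. (a i \<bullet> a j) * (w i \<bullet> w j))"
    apply (simp add: power2_norm_eq_inner inner_sum_left inner_sum_right outer_inner)
    by (rule sum.swap)
  also have "\<dots> = (\<Sum>i\<in>I. a i \<bullet> a i)"
  proof (rule sum.cong[OF refl])
    fix i assume i: "i \<in> I"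
    have "(\<Sum>j\<in>I. (a i \<bullet> a j) * (w i \<bullet> w j)) = (\<Sum>j\<in>I. if j = i then a i \<bullet> a i else 0)"
      using assms i by (intro sum.cong) (auto simp: orthonormal_on_def)
    thus "(\<Sum>j\<in>I. (a i \<bullet> a j) * (w i \<bullet> w j)) = a i \<bullet> a i" using assms i by simp
  qed
  finally show ?thesis by (simp add: power2_norm_eq_inner)
qed

lemma orthonormal_inj: "orthonormal_on I w \<Longrightarrow> inj_on w I"
  unfolding orthonormal_on_def inj_on_def
  by (metis inner_zero_left inner_commute one_neq_zero)

lemma orthonormal_expand:
  fixes w :: "nat \<Rightarrow> real^'m"
  assumes on: "orthonormal_on I w" and fin: "finite I" and card: "card I = CARD('m)"
  shows "x = (\<Sum>i\<in>I. (w i \<bullet> x) *\<^sub>R w i)"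
proof -
  let ?W = "w ` I"
  have inj: "inj_on w I" using orthonormal_inj[OF on] .
  have cW: "card ?W = CARD('m)" using card inj by (simp add: card_image)
  have po: "pairwise orthogonal ?W"
    using on inj unfolding pairwise_def orthogonal_def orthonormal_on_def inj_on_def by auto
  have nz: "0 \<notin> ?W"
    using on unfolding orthonormal_on_def by (auto, metis inner_zero_left zero_neq_one)
  have ind: "independent ?W"
    using pairwise_orthogonal_independent[OF po nz] .
  have sp: "span ?W = UNIV"
    using ind cW by (simp add: dim_eq_full[symmetric] dim_eq_card_independent)
  define y where "y = x - (\<Sum>i\<in>I. (w i \<bullet> x) *\<^sub>R w i)"
  have orth: "w j \<bullet> y = 0" if "j \<in> I" for j
  proof -
    have "w j \<bullet> (\<Sum>i\<in>I. (w i \<bullet> x) *\<^sub>R w i) = (\<Sum>i\<in>I. (w i \<bullet> x) * (w i \<bullet> w j))"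
      by (simp add: inner_sum_right inner_commute)
    also have "\<dots> = w j \<bullet> x" using sum_delta_inner[OF on fin that] .
    finally show ?thesis by (simp add: y_def inner_diff_right)
  qed
  have "y \<bullet> y = 0"
  proof -
    have "y \<in> span ?W" using sp by simp
    moreover have "\<forall>z\<in>?W. orthogonal z y" using orth by (auto simp: orthogonal_def)
    ultimately have "orthogonal y y"
      by (metis orthogonal_commute orthogonal_to_span)
    thus ?thesis by (simp add: orthogonal_def)
  qed
  hence "y = 0" by simp
  thus ?thesis by (simp add: y_def)
qed

lemma orthonormal_complete:
  fixes w :: "nat \<Rightarrow> real^'m"
  assumes on: "orthonormal_on I w" and fin: "finite I" and card: "card I = CARD('m)"
  shows "(\<Sum>i\<in>I. outer (w i) (w i)) = mat 1"
  unfolding matrix_eq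
proof
  fix x
  have "(\<Sum>i\<in>I. outer (w i) (w i)) *v x = (\<Sum>i\<in>I. (w i \<bullet> x) *\<^sub>R w i)"
    by (simp add: mv_sum_left outer_mv)
  also have "\<dots> = x" using orthonormal_expand[OF on fin card] by simp
  finally show "(\<Sum>i\<in>I. outer (w i) (w i)) *v x = mat 1 *v x" by simp
qed

definition spec :: "nat set \<Rightarrow> (nat \<Rightarrow> real^'m) \<Rightarrow> (nat \<Rightarrow> real) \<Rightarrow> real^'m^'m" where
  "spec I w c = (\<Sum>i\<in>I. c i *\<^sub>R outer (w i) (w i))"

lemma spec_transpose: "transpose (spec I w c) = spec I w c"
  by (simp add: spec_def transpose_sum transpose_scaleR transpose_outer)

lemma spec_mv:
  assumes on: "orthonormal_on I w" and fin: "finite I" and j: "j \<in> I"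
  shows "spec I w c *v w j = c j *\<^sub>R w j"
proof -
  have "spec I w c *v w j = (\<Sum>i\<in>I. c i *\<^sub>R (w i \<bullet> w j) *\<^sub>R w i)"
    by (simp add: spec_def mv_sum_left outer_mv mv_scaleR_left)
  also have "\<dots> = (\<Sum>i\<in>I. if i = j then c j *\<^sub>R w j else 0)"
    using on j by (intro sum.cong) (auto simp: orthonormal_on_def)
  finally show ?thesis using fin j by simp
qed

lemma spec_quad: "x \<bullet> (spec I w c *v x) = (\<Sum>i\<in>I. c i * (w i \<bullet> x)^2)"
  by (simp add: spec_def mv_sum_left outer_mv mv_scaleR_left inner_sum_right power2_eq_square inner_commute mult.assoc)

lemma spec_mult:
  assumes on: "orthonormal_on I w" and fin: "finite I"
  shows "spec I w c ** spec I w d = spec I w (\<lambda>i. c i * d i)"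
proof -
  have "spec I w c ** spec I w d = (\<Sum>i\<in>I. c i *\<^sub>R outer (w i) (transpose (spec I w d) *v w i))"
    by (simp add: spec_def[of I w c] mm_sum_left mm_scaleR_left outer_mult_right)
  also have "\<dots> = (\<Sum>i\<in>I. c i *\<^sub>R outer (w i) (d i *\<^sub>R w i))"
    by (intro sum.cong refl) (simp add: spec_transpose spec_mv[OF on fin])
  finally show ?thesis by (simp add: spec_def outer_scaleR_right)
qed

lemma spec_one:
  assumes "orthonormal_on I w" "finite I" "card I = CARD('m)"
  shows "spec I w (\<lambda>i. 1) = (mat 1 :: real^'m^'m)"
  using orthonormal_complete[OF assms] by (simp add: spec_def)

lemma spec_cong: "(\<And>i. i \<in> I \<Longrightarrow> c i = d i) \<Longrightarrow> spec I w c = spec I w d"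
  unfolding spec_def by (rule sum.cong) auto

lemma mv_sum_right: "(A::real^'m^'n) *v (\<Sum>i\<in>I. x i) = (\<Sum>i\<in>I. A *v x i)"
  by (induction I rule: infinite_finite_induct) (auto simp: matrix_vector_right_distrib)

lemma matrix_inv_eq:
  fixes A :: "real^'m^'m"
  assumes "A ** B = mat 1" "B ** A = mat 1"
  shows "matrix_inv A = B"
proof -
  have ex: "\<exists>A'. A ** A' = mat 1 \<and> A' ** A = mat 1" using assms by blast
  define A' where "A' = matrix_inv A"
  have h: "A ** A' = mat 1 \<and> A' ** A = mat 1"
    unfolding A'_def matrix_inv_def by (rule someI_ex[OF ex])
  have "A' = A' ** (A ** B)" using assms by simp
  also have "\<dots> = (A' ** A) ** B" by (simp add: matrix_mul_assoc)
  also have "\<dots> = B" using h by simp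
  finally show ?thesis by (simp add: A'_def)
qed

context
  fixes I :: "nat set" and w :: "nat \<Rightarrow> real^'m"
  assumes on: "orthonormal_on I w" and fin: "finite I" and card: "card I = CARD('m)"
begin

lemma spec_inv:
  assumes pos: "\<And>i. i \<in> I \<Longrightarrow> c i > 0"
  shows "matrix_inv (spec I w c) = spec I w (\<lambda>i. 1 / c i)"
proof (rule matrix_inv_eq)
  have "spec I w (\<lambda>i. c i * (1 / c i)) = spec I w (\<lambda>i. 1)"
    using pos by (intro spec_cong) (metis less_irrefl nonzero_mult_div_cancel_left div_by_1 times_divide_eq_right)
  thus "spec I w c ** spec I w (\<lambda>i. 1 / c i) = mat 1"
    by (simp only: spec_mult[OF on fin] spec_one[OF on fin card])
  have "spec I w (\<lambda>i. (1 / c i) * c i) = spec I w (\<lambda>i. 1)"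
    using pos by (intro spec_cong) (metis less_irrefl nonzero_mult_div_cancel_left div_by_1 times_divide_eq_right mult.commute)
  thus "spec I w (\<lambda>i. 1 / c i) ** spec I w c = mat 1"
    by (simp only: spec_mult[OF on fin] spec_one[OF on fin card])
qed

lemma psd_spec: "(\<And>i. i \<in> I \<Longrightarrow> c i \<ge> 0) \<Longrightarrow> psd (spec I w c)"
  unfolding psd_def spec_quad by (auto simp: spec_transpose intro!: sum_nonneg)

lemma mat_eq_on_basis:
  fixes A B :: "real^'m^'m"
  assumes "\<And>i. i \<in> I \<Longrightarrow> A *v w i = B *v w i"
  shows "A = B"
  unfolding matrix_eq
proof
  fix x
  have "A *v x = A *v (\<Sum>i\<in>I. (w i \<bullet> x) *\<^sub>R w i)"
    using orthonormal_expand[OF on fin card, of x] by simp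
  also have "\<dots> = (\<Sum>i\<in>I. (w i \<bullet> x) *\<^sub>R (A *v w i))"
    by (simp add: mv_sum_right matrix_vector_mult_scaleR)
  also have "\<dots> = (\<Sum>i\<in>I. (w i \<bullet> x) *\<^sub>R (B *v w i))"
    using assms by (intro sum.cong) auto
  also have "\<dots> = B *v (\<Sum>i\<in>I. (w i \<bullet> x) *\<^sub>R w i)"
    by (simp add: mv_sum_right matrix_vector_mult_scaleR)
  also have "\<dots> = B *v x"
    using orthonormal_expand[OF on fin card, of x] by simp
  finally show "A *v x = B *v x" .
qed

lemma psd_sqrt_unique:
  assumes pos: "\<And>i. i \<in> I \<Longrightarrow> c i > 0"
    and S: "psd S" "S ** S = spec I w c"
  shows "S = spec I w (\<lambda>i. sqrt (c i))"
proof (rule mat_eq_on_basis)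
  fix j assume j: "j \<in> I"
  define s where "s = sqrt (c j)"
  have s: "s > 0" using pos[OF j] by (simp add: s_def)
  define y where "y = S *v w j - s *\<^sub>R w j"
  have "S *v y = S *v (S *v w j) - s *\<^sub>R (S *v w j)"
    by (simp add: y_def matrix_vector_mult_diff_distrib matrix_vector_mult_scaleR)
  hence "S *v y + s *\<^sub>R y = S *v (S *v w j) - (s * s) *\<^sub>R w j"
    by (simp add: y_def scaleR_diff_right)
  also have "\<dots> = (S ** S) *v w j - (s * s) *\<^sub>R w j" by (simp add: matrix_vector_mul_assoc)
  also have "\<dots> = 0"
    using S(2) spec_mv[OF on fin j, of c] pos[OF j]
    by (simp add: s_def)
  finally have eq: "S *v y + s *\<^sub>R y = 0" .
  have "0 = y \<bullet> (S *v y + s *\<^sub>R y)" using eq by simp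
  also have "\<dots> = y \<bullet> (S *v y) + s * (y \<bullet> y)" by (simp add: inner_add_right)
  finally have "s * (y \<bullet> y) \<le> 0"
    using S(1) unfolding psd_def by (metis le_add_same_cancel2)
  hence "y \<bullet> y \<le> 0" using s by (simp add: mult_le_0_iff)
  hence "y = 0" by (metis inner_ge_zero inner_eq_zero_iff order_antisym)
  thus "S *v w j = spec I w (\<lambda>i. sqrt (c i)) *v w j"
    using spec_mv[OF on fin j] by (simp add: y_def s_def)
qed

lemma inv_sqrt_spec:
  assumes pos: "\<And>i. i \<in> I \<Longrightarrow> c i > 0"
  shows "inv_sqrt (spec I w c) = spec I w (\<lambda>i. 1 / sqrt (c i))"
  unfolding inv_sqrt_def
proof (rule the_equality)
  have pos': "\<And>i. i \<in> I \<Longrightarrow> 1 / c i > 0" using pos by simp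
  have e1: "spec I w (\<lambda>i. 1 / sqrt (c i) * (1 / sqrt (c i))) = spec I w (\<lambda>i. 1 / c i)"
  proof (rule spec_cong)
    fix i assume "i \<in> I"
    hence "c i > 0" by (rule pos)
    thus "1 / sqrt (c i) * (1 / sqrt (c i)) = 1 / c i"
      by simp
  qed
  have "spec I w (\<lambda>i. 1 / sqrt (c i)) ** spec I w (\<lambda>i. 1 / sqrt (c i)) = spec I w (\<lambda>i. 1 / c i)"
    by (simp only: spec_mult[OF on fin] e1)
  thus "psd (spec I w (\<lambda>i. 1 / sqrt (c i))) \<and>
        spec I w (\<lambda>i. 1 / sqrt (c i)) ** spec I w (\<lambda>i. 1 / sqrt (c i)) = matrix_inv (spec I w c)"
    using psd_spec[of "\<lambda>i. 1 / sqrt (c i)"] pos spec_inv[OF pos] by (simp add: less_imp_le)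
  fix S assume "psd S \<and> S ** S = matrix_inv (spec I w c)"
  hence "S = spec I w (\<lambda>i. sqrt (1 / c i))"
    using psd_sqrt_unique[OF pos'] spec_inv[OF pos] by simp
  thus "S = spec I w (\<lambda>i. 1 / sqrt (c i))"
    by (simp add: real_sqrt_divide)
qed

end

section \<open>Symmetry of the Hessian\<close>

lemma delta_estimate:
  fixes \<phi> :: "'a::real_inner \<Rightarrow> real"
  assumes d1: "\<And>x. (\<phi> has_derivative (\<lambda>v. g x \<bullet> v)) (at x)"
    and lin: "linear H"
    and dd: "\<And>y. norm (y - a) < d \<Longrightarrow> norm (g y - g a - H (y - a)) \<le> e * norm (y - a)"
    and s: "s > 0" "s * (norm h + norm k) < d" and e: "e \<ge> 0"
  shows "\<bar>(\<phi> (a + s *\<^sub>R h + s *\<^sub>R k) - \<phi> (a + s *\<^sub>R h) - \<phi> (a + s *\<^sub>R k) + \<phi> a) - s^2 * (H h \<bullet> k)\<bar>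
          \<le> e * s^2 * (norm k * (norm h + 2 * norm k))"
proof -
  define \<gamma> where "\<gamma> t = \<phi> (a + s *\<^sub>R h + t *\<^sub>R k) - \<phi> (a + t *\<^sub>R k)" for t
  have der: "(\<gamma> has_derivative (\<lambda>dt. g (a + s *\<^sub>R h + t *\<^sub>R k) \<bullet> (dt *\<^sub>R k) - g (a + t *\<^sub>R k) \<bullet> (dt *\<^sub>R k))) (at t)" for t
  proof -
    have l1: "((\<lambda>t. a + s *\<^sub>R h + t *\<^sub>R k) has_derivative (\<lambda>dt. dt *\<^sub>R k)) (at t)"
      by (auto intro!: derivative_eq_intros)
    have l2: "((\<lambda>t. a + t *\<^sub>R k) has_derivative (\<lambda>dt. dt *\<^sub>R k)) (at t)"
      by (auto intro!: derivative_eq_intros)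
    show ?thesis unfolding \<gamma>_def
      by (intro has_derivative_diff has_derivative_compose[OF l1 d1] has_derivative_compose[OF l2 d1])
  qed
  have cont: "continuous_on {0..s} \<gamma>"
    using der by (meson continuous_at_imp_continuous_on has_derivative_continuous)
  obtain \<tau> where \<tau>: "0 < \<tau>" "\<tau> < s"
    and mv: "\<gamma> s - \<gamma> 0 = g (a + s *\<^sub>R h + \<tau> *\<^sub>R k) \<bullet> ((s - 0) *\<^sub>R k) - g (a + \<tau> *\<^sub>R k) \<bullet> ((s - 0) *\<^sub>R k)"
    using mvt[OF s(1) cont der] by blast
  define y1 where "y1 = a + s *\<^sub>R h + \<tau> *\<^sub>R k"
  define y2 where "y2 = a + \<tau> *\<^sub>R k"
  have n1: "norm (y1 - a) \<le> s * norm h + \<tau> * norm k"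
    unfolding y1_def using s \<tau> by (simp add: norm_triangle_le)
  have n2: "norm (y2 - a) = \<tau> * norm k"
    unfolding y2_def using \<tau> by simp
  have "s * norm h + \<tau> * norm k \<le> s * (norm h + norm k)"
    using \<tau> by (simp add: algebra_simps mult_right_mono)
  hence b1: "norm (y1 - a) < d" using n1 s by linarith
  have "\<tau> * norm k \<le> s * norm h + \<tau> * norm k" using s by simp
  hence b2: "norm (y2 - a) < d" using n2 b1 n1 \<open>s * norm h + \<tau> * norm k \<le> s * (norm h + norm k)\<close> s by linarith
  define err where "err = (g y1 - g a - H (y1 - a)) - (g y2 - g a - H (y2 - a))"
  have Hdiff: "H (y1 - a) - H (y2 - a) = s *\<^sub>R H h"
    using lin unfolding y1_def y2_def by (simp add: linear_add linear_scale linear_diff[symmetric])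
  have gdiff: "g y1 - g y2 = s *\<^sub>R H h + err"
    unfolding err_def using Hdiff by (simp add: algebra_simps)
  have nerr: "norm err \<le> e * s * (norm h + 2 * norm k)"
  proof -
    have "norm err \<le> norm (g y1 - g a - H (y1 - a)) + norm (g y2 - g a - H (y2 - a))"
      unfolding err_def by (rule norm_triangle_ineq4)
    also have "\<dots> \<le> e * norm (y1 - a) + e * norm (y2 - a)"
      using dd[OF b1] dd[OF b2] by simp
    also have "\<dots> \<le> e * (s * norm h + \<tau> * norm k) + e * (\<tau> * norm k)"
      using n1 n2 e by (simp add: mult_left_mono)
    also have "\<dots> \<le> e * s * (norm h + 2 * norm k)"
    proof -
      have "s * norm h + \<tau> * norm k + \<tau> * norm k \<le> s * (norm h + 2 * norm k)"
        using \<tau> by (simp add: algebra_simps mult_right_mono)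
      thus ?thesis using e by (metis distrib_left mult.assoc mult_left_mono)
    qed
    finally show ?thesis .
  qed
  have "\<gamma> s - \<gamma> 0 = \<phi> (a + s *\<^sub>R h + s *\<^sub>R k) - \<phi> (a + s *\<^sub>R h) - \<phi> (a + s *\<^sub>R k) + \<phi> a"
    by (simp add: \<gamma>_def)
  moreover have "\<gamma> s - \<gamma> 0 = s * (s * (H h \<bullet> k)) + s * (err \<bullet> k)"
    using mv gdiff unfolding y1_def[symmetric] y2_def[symmetric]
    by (simp add: inner_diff_left[symmetric] inner_add_left algebra_simps)
  ultimately have eq: "(\<phi> (a + s *\<^sub>R h + s *\<^sub>R k) - \<phi> (a + s *\<^sub>R h) - \<phi> (a + s *\<^sub>R k) + \<phi> a) - s^2 * (H h \<bullet> k)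
      = s * (err \<bullet> k)" by (simp add: power2_eq_square)
  have "\<bar>s * (err \<bullet> k)\<bar> \<le> s * (norm err * norm k)"
    using s by (simp add: abs_mult Cauchy_Schwarz_ineq2)
  also have "\<dots> \<le> s * (e * s * (norm h + 2 * norm k) * norm k)"
    using mult_right_mono[OF nerr norm_ge_zero[of k]] s by (simp add: mult_left_mono)
  also have "\<dots> = e * s^2 * (norm k * (norm h + 2 * norm k))"
    by (simp add: power2_eq_square algebra_simps)
  finally show ?thesis using eq by simp
qed

lemma hessian_symmetric:
  fixes \<phi> :: "'a::real_inner \<Rightarrow> real"
  assumes d1: "\<And>x. (\<phi> has_derivative (\<lambda>v. g x \<bullet> v)) (at x)"
    and d2: "(g has_derivative H) (at a)"
  shows "H h \<bullet> k = H k \<bullet> h"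
proof (rule ccontr)
  assume ne: "H h \<bullet> k \<noteq> H k \<bullet> h"
  define D where "D = \<bar>H h \<bullet> k - H k \<bullet> h\<bar>"
  have D: "D > 0" using ne by (simp add: D_def)
  define C where "C = norm k * (norm h + 2 * norm k) + norm h * (norm k + 2 * norm h) + 1"
  have "norm k * (norm h + 2 * norm k) \<ge> 0" "norm h * (norm k + 2 * norm h) \<ge> 0" by simp_all
  hence C: "C > 0" unfolding C_def by linarith
  define e where "e = D / (2 * C)"
  have e: "e > 0" using D C by (simp add: e_def)
  have lin: "linear H" using has_derivative_bounded_linear[OF d2] bounded_linear.linear by blast
  obtain d where d: "d > 0" and dd: "\<And>y. norm (y - a) < d \<Longrightarrow> norm (g y - g a - H (y - a)) \<le> e * norm (y - a)"
    using d2 e unfolding has_derivative_at_alt by blast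
  define s where "s = d / (2 * (norm h + norm k + 1))"
  have s: "s > 0" using d by (simp add: s_def add_nonneg_pos)
  have s2: "s * (norm h + norm k) < d"
  proof -
    have "s * (norm h + norm k) \<le> s * (norm h + norm k + 1)" using s by simp
    also have "\<dots> = d / 2"
    proof -
      have "norm h + norm k + 1 > 0" by (simp add: add_nonneg_pos)
      thus ?thesis unfolding s_def by (simp add: field_simps)
    qed
    finally show ?thesis using d by simp
  qed
  have s2': "s * (norm k + norm h) < d" using s2 by (simp add: add.commute)
  define \<Delta> where "\<Delta> = \<phi> (a + s *\<^sub>R h + s *\<^sub>R k) - \<phi> (a + s *\<^sub>R h) - \<phi> (a + s *\<^sub>R k) + \<phi> a"
  have E1: "\<bar>\<Delta> - s^2 * (H h \<bullet> k)\<bar> \<le> e * s^2 * (norm k * (norm h + 2 * norm k))"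
    unfolding \<Delta>_def by (rule delta_estimate[OF d1 lin dd s s2 less_imp_le[OF e]])
  have E2: "\<bar>\<Delta> - s^2 * (H k \<bullet> h)\<bar> \<le> e * s^2 * (norm h * (norm k + 2 * norm h))"
  proof -
    have "\<Delta> = \<phi> (a + s *\<^sub>R k + s *\<^sub>R h) - \<phi> (a + s *\<^sub>R k) - \<phi> (a + s *\<^sub>R h) + \<phi> a"
      unfolding \<Delta>_def by (simp add: add_ac)
    thus ?thesis using delta_estimate[OF d1 lin dd s s2' less_imp_le[OF e]] by simp
  qed
  have "s^2 * D \<le> e * s^2 * (norm k * (norm h + 2 * norm k)) + e * s^2 * (norm h * (norm k + 2 * norm h))"
  proof -
    have "s^2 * D = \<bar>(\<Delta> - s^2 * (H k \<bullet> h)) - (\<Delta> - s^2 * (H h \<bullet> k))\<bar>"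
    proof -
      have "s^2 * D = \<bar>s^2 * (H h \<bullet> k - H k \<bullet> h)\<bar>" unfolding D_def by (simp add: abs_mult)
      thus ?thesis by (simp add: algebra_simps)
    qed
    also have "\<dots> \<le> \<bar>\<Delta> - s^2 * (H k \<bullet> h)\<bar> + \<bar>\<Delta> - s^2 * (H h \<bullet> k)\<bar>"
      by (rule abs_triangle_ineq4)
    finally show ?thesis using E1 E2 by linarith
  qed
  also have "\<dots> = s^2 * (e * (C - 1))" by (simp add: C_def algebra_simps)
  also have "\<dots> < s^2 * (e * C)" using s e by simp
  also have "\<dots> = s^2 * (D / 2)" using C by (simp add: e_def)
  finally show False using s D by simp
qed

section \<open>Hessian upper bound from Lipschitz gradient\<close>

lemma hessian_norm_bound:
  fixes g :: "'a::real_normed_vector \<Rightarrow> 'b::real_normed_vector"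
  assumes d2: "(g has_derivative H) (at a)"
    and lip: "\<And>M E. norm (g (M + E) - g M) \<le> L * norm E"
  shows "norm (H w) \<le> L * norm w"
proof (cases "w = 0")
  case True
  have "linear H" using has_derivative_bounded_linear[OF d2] bounded_linear.linear by blast
  thus ?thesis using True by (simp add: linear_0)
next
  case False
  hence nw: "norm w > 0" by simp
  have lin: "bounded_linear H" using has_derivative_bounded_linear[OF d2] .
  show ?thesis
  proof (rule field_le_epsilon)
    fix e :: real assume e: "e > 0"
    define e' where "e' = e / norm w"
    have e': "e' > 0" using e nw by (simp add: e'_def)
    obtain d where d: "d > 0" and dd: "\<And>y. norm (y - a) < d \<Longrightarrow> norm (g y - g a - H (y - a)) \<le> e' * norm (y - a)"
      using d2 e' unfolding has_derivative_at_alt by blast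
    define t where "t = d / (2 * norm w)"
    have t: "t > 0" using d nw by (simp add: t_def)
    have "norm ((a + t *\<^sub>R w) - a) = t * norm w" using t by simp
    also have "\<dots> = d / 2" using nw by (simp add: t_def)
    finally have "norm ((a + t *\<^sub>R w) - a) < d" using d by simp
    from dd[OF this] have 1: "norm (g (a + t *\<^sub>R w) - g a - t *\<^sub>R H w) \<le> e' * (t * norm w)"
      using t bounded_linear.linear[OF lin] by (simp add: linear_scale)
    have 2: "norm (g (a + t *\<^sub>R w) - g a) \<le> L * (t * norm w)"
      using lip[of a "t *\<^sub>R w"] t by simp
    have "t * norm (H w) = norm (t *\<^sub>R H w)" using t by simp
    also have "\<dots> \<le> norm (g (a + t *\<^sub>R w) - g a) + norm (g (a + t *\<^sub>R w) - g a - t *\<^sub>R H w)"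
      by (metis norm_triangle_ineq4 diff_diff_eq2 add_diff_cancel_left' norm_minus_commute)
    also have "\<dots> \<le> L * (t * norm w) + e' * (t * norm w)" using 1 2 by simp
    also have "\<dots> = t * (L * norm w + e)" using nw by (simp add: e'_def algebra_simps)
    finally show "norm (H w) \<le> L * norm w + e" using t by simp
  qed
qed

section \<open>Polarization\<close>

lemma polarization_bound:
  fixes H :: "'a::real_inner \<Rightarrow> 'a"
  assumes lin: "linear H" and sym: "\<And>x y. H x \<bullet> y = H y \<bullet> x"
    and ne: "E \<noteq> 0" "Z \<noteq> 0"
    and lo: "H (E /\<^sub>R norm E + Z /\<^sub>R norm Z) \<bullet> (E /\<^sub>R norm E + Z /\<^sub>R norm Z) \<ge> \<mu> * (norm (E /\<^sub>R norm E + Z /\<^sub>R norm Z))^2"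
    and up: "H (E /\<^sub>R norm E - Z /\<^sub>R norm Z) \<bullet> (E /\<^sub>R norm E - Z /\<^sub>R norm Z) \<le> L * (norm (E /\<^sub>R norm E - Z /\<^sub>R norm Z))^2"
  shows "2 * (H E \<bullet> Z) \<ge> (\<mu> + L) * (E \<bullet> Z) + (\<mu> - L) * (norm E * norm Z)"
proof -
  define e where "e = E /\<^sub>R norm E"
  define z where "z = Z /\<^sub>R norm Z"
  have ne1: "norm e = 1" "norm z = 1" using ne by (simp_all add: e_def z_def)
  define c where "c = e \<bullet> z"
  have ee: "e \<bullet> e = 1" "z \<bullet> z = 1" using ne1 by (simp_all add: norm_eq_1)
  have sq1: "(norm (e + z))^2 = 2 + 2 * c"
  proof -
    have "(norm (e + z))^2 = (e + z) \<bullet> (e + z)" by (simp add: power2_norm_eq_inner)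
    also have "\<dots> = e \<bullet> e + 2 * (e \<bullet> z) + z \<bullet> z" by (simp add: inner_add_left inner_add_right inner_commute)
    finally show ?thesis using ee by (simp add: c_def)
  qed
  have sq2: "(norm (e - z))^2 = 2 - 2 * c"
  proof -
    have "(norm (e - z))^2 = (e - z) \<bullet> (e - z)" by (simp add: power2_norm_eq_inner)
    also have "\<dots> = e \<bullet> e - 2 * (e \<bullet> z) + z \<bullet> z" by (simp add: inner_diff_left inner_diff_right inner_commute)
    finally show ?thesis using ee by (simp add: c_def)
  qed
  have p1: "H (e + z) \<bullet> (e + z) = H e \<bullet> e + 2 * (H e \<bullet> z) + H z \<bullet> z"
    using lin sym[of z e] by (simp add: linear_add inner_add_left inner_add_right)
  have p2: "H (e - z) \<bullet> (e - z) = H e \<bullet> e - 2 * (H e \<bullet> z) + H z \<bullet> z"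
    using lin sym[of z e] by (simp add: linear_diff inner_diff_left inner_diff_right)
  have "4 * (H e \<bullet> z) \<ge> \<mu> * (2 + 2 * c) - L * (2 - 2 * c)"
    using lo up unfolding e_def[symmetric] z_def[symmetric] sq1 sq2 p1 p2 by linarith
  hence key: "2 * (H e \<bullet> z) \<ge> (\<mu> + L) * c + (\<mu> - L)" by (simp add: algebra_simps)
  have HE: "H E \<bullet> Z = (norm E * norm Z) * (H e \<bullet> z)"
    using lin ne by (simp add: e_def z_def linear_scale field_simps)
  have EZ: "E \<bullet> Z = (norm E * norm Z) * c"
    using ne by (simp add: e_def z_def c_def field_simps)
  have pos: "norm E * norm Z > 0" using ne by simp
  show ?thesis unfolding HE EZ
    using mult_left_mono[OF key less_imp_le[OF pos]] by (simp add: algebra_simps)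
qed

lemma grad_eqI:
  assumes "(f has_derivative (\<lambda>h. g \<bullet> h)) (at x)"
  shows "grad f x = g"
  unfolding grad_def
proof (rule the_equality)
  show "(f has_derivative (\<lambda>h. g \<bullet> h)) (at x)" by (rule assms)
  fix g' assume "(f has_derivative (\<lambda>h. g' \<bullet> h)) (at x)"
  hence "(\<lambda>h. g' \<bullet> h) = (\<lambda>h. g \<bullet> h)" using assms has_derivative_unique by blast
  hence "g' \<bullet> (g' - g) = g \<bullet> (g' - g)" by metis
  hence "(g' - g) \<bullet> (g' - g) = 0" by (simp add: inner_diff_left)
  thus "g' = g" by simp
qed

lemma grad_zero_at_min:
  assumes d: "(f has_derivative (\<lambda>h. grad f x \<bullet> h)) (at x)"
    and m: "\<forall>y. f x \<le> f y"
  shows "grad f x = 0"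
proof -
  have "(\<lambda>h. grad f x \<bullet> h) = (\<lambda>h. 0)"
    by (rule has_derivative_local_min[OF d]) (use m in auto)
  hence "grad f x \<bullet> grad f x = 0" by metis
  thus ?thesis by simp
qed

lemma bilinear_mmT: "bounded_bilinear (\<lambda>(A::real^'k^'n) (B::real^'k^'m). A ** transpose B)"
proof -
  have "bilinear (\<lambda>(A::real^'k^'n) (B::real^'k^'m). A ** transpose B)"
    unfolding bilinear_def linear_iff
    by (simp add: matrix_add_ldistrib mm_add_rdistrib transpose_add transpose_scaleR mm_scaleR_left mm_scaleR_right)
  thus ?thesis by (simp add: bilinear_conv_bounded_bilinear)
qed

lemma deriv_XXT: "((\<lambda>Z::real^'r^'n. Z ** transpose Z) has_derivative (\<lambda>H. X ** transpose H + H ** transpose X)) (at X)"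
  using bounded_bilinear.FDERIV[OF bilinear_mmT has_derivative_ident has_derivative_ident, of X UNIV]
  by simp

lemma grad_f:
  fixes \<phi> :: "real^'n^'n \<Rightarrow> real" and X :: "real^'r^'n"
  assumes d1: "(\<phi> has_derivative (\<lambda>h. grad \<phi> (X ** transpose X) \<bullet> h)) (at (X ** transpose X))"
  shows "grad (\<lambda>Z::real^'r^'n. \<phi> (Z ** transpose Z)) X \<bullet> Y = grad \<phi> (X ** transpose X) \<bullet> (X ** transpose Y + Y ** transpose X)"
proof -
  define G where "G = grad \<phi> (X ** transpose X)"
  have "((\<lambda>Z::real^'r^'n. \<phi> (Z ** transpose Z)) has_derivative (\<lambda>H. G \<bullet> (X ** transpose H + H ** transpose X))) (at X)"
    using has_derivative_compose[OF deriv_XXT d1] by (simp add: G_def)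
  moreover have "G \<bullet> (X ** transpose H + H ** transpose X) = ((G + transpose G) ** X) \<bullet> H" for H
  proof -
    have a: "G \<bullet> (X ** transpose H) = (transpose G ** X) \<bullet> H"
      by (simp add: inner_mm_right inner_transpose_right matrix_transpose_mul)
    have b: "G \<bullet> (H ** transpose X) = (G ** X) \<bullet> H"
      by (simp add: inner_mm_left)
    show ?thesis by (simp add: inner_add_right a b mm_add_rdistrib inner_add_left)
  qed
  ultimately have "((\<lambda>Z::real^'r^'n. \<phi> (Z ** transpose Z)) has_derivative (\<lambda>H. ((G + transpose G) ** X) \<bullet> H)) (at X)"
    by simp
  hence "grad (\<lambda>Z::real^'r^'n. \<phi> (Z ** transpose Z)) X = (G + transpose G) ** X" by (rule grad_eqI)
  thus ?thesis using \<open>G \<bullet> (X ** transpose Y + Y ** transpose X) = ((G + transpose G) ** X) \<bullet> Y\<close>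
    by (simp add: G_def)
qed

lemma poly_det: "poly (det M) c = det (\<chi> i j. poly (M$i$j) c)"
  unfolding det_def by (simp add: poly_sum poly_prod)

lemma charpoly_eval: "poly (charpoly A) c = det (mat c - A)"
  unfolding charpoly_def poly_det
  by (rule arg_cong[where f=det]) (simp add: vec_eq_iff mat_def)

lemma mat_mv: "mat c *v x = c *\<^sub>R (x::real^'n)"
  by (simp add: matrix_vector_mult_def mat_def vec_eq_iff if_distrib[of "\<lambda>z. z * _"] cong: if_cong)

lemma det_similar:
  fixes Q M :: "real^'n^'n"
  assumes "transpose Q ** Q = mat 1"
  shows "det (transpose Q ** M ** Q) = det M"
proof -
  have "det (transpose Q ** M ** Q) = det M * (det (transpose Q) * det Q)"
    by (simp add: det_mul)
  also have "det (transpose Q) * det Q = 1"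
    using assms by (metis det_I det_mul)
  finally show ?thesis by simp
qed

lemma QTMQ_entry:
  fixes b :: "'n \<Rightarrow> real^'n" and M :: "real^'n^'n"
  shows "(transpose (\<chi> i j. b j $ i) ** M ** (\<chi> i j. b j $ i)) $ i $ j = b i \<bullet> (M *v b j)"
  apply (simp add: matrix_matrix_mult_def transpose_def matrix_vector_mult_def inner_vec_def
      sum_distrib_left sum_distrib_right)
  apply (rule trans[OF sum.swap])
  by (simp add: algebra_simps)

lemma orthonormal_extend:
  fixes u :: "nat \<Rightarrow> real^'n"
  assumes on: "orthonormal_on I u" and fin: "finite I"
  obtains b :: "'n \<Rightarrow> real^'n" and p :: "nat \<Rightarrow> 'n" where
    "\<And>i j. b i \<bullet> b j = (if i = j then 1 else 0)"
    "inj_on p I" "\<And>i. i \<in> I \<Longrightarrow> b (p i) = u i"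
    "\<And>j i. j \<notin> p ` I \<Longrightarrow> i \<in> I \<Longrightarrow> u i \<bullet> b j = 0"
proof -
  define W where "W = {x. \<forall>i\<in>I. u i \<bullet> x = 0}"
  have sW: "subspace W"
    unfolding subspace_def W_def by (auto simp: inner_add_right)
  obtain B where B: "B \<subseteq> W" "pairwise orthogonal B" "\<And>x. x \<in> B \<Longrightarrow> norm x = 1"
    "independent B" "span B = W"
    using orthonormal_basis_subspace[OF sW] by metis
  have uu: "u i \<bullet> u j = (if i = j then 1 else 0)" if "i \<in> I" "j \<in> I" for i j
    using on that unfolding orthonormal_on_def by blast
  have injU: "inj_on u I" using orthonormal_inj[OF on] .
  define S where "S = u ` I \<union> B"
  have disj: "u ` I \<inter> B = {}"
  proof -
    { fix i assume i: "i \<in> I" "u i \<in> B"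
      hence "u i \<bullet> u i = 0" using B(1) unfolding W_def by blast
      hence False using uu[OF i(1) i(1)] by simp }
    thus ?thesis by blast
  qed
  have poS: "pairwise orthogonal S"
    unfolding pairwise_def S_def
  proof (intro ballI impI)
    fix x y assume x: "x \<in> u ` I \<union> B" and y: "y \<in> u ` I \<union> B" and xy: "x \<noteq> y"
    show "orthogonal x y"
    proof (cases "x \<in> u ` I")
      case True
      then obtain i where i: "i \<in> I" "x = u i" by blast
      show ?thesis
      proof (cases "y \<in> u ` I")
        case True
        then obtain j where j: "j \<in> I" "y = u j" by blast
        thus ?thesis using i xy uu by (auto simp: orthogonal_def)
      next
        case False
        hence "y \<in> W" using y B(1) by blast
        thus ?thesis using i unfolding W_def orthogonal_def by blast
      qed
    next
      case False
      hence xB: "x \<in> W" "x \<in> B" using x B(1) by blast+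
      show ?thesis
      proof (cases "y \<in> u ` I")
        case True
        then obtain j where j: "j \<in> I" "y = u j" by blast
        thus ?thesis using xB(1) unfolding W_def orthogonal_def by (simp add: inner_commute)
      next
        case False
        hence "y \<in> B" using y by blast
        thus ?thesis using xB(2) xy B(2) unfolding pairwise_def by blast
      qed
    qed
  qed
  have n1: "norm x = 1" if "x \<in> S" for x
    using that B(3) uu unfolding S_def by (auto simp: norm_eq_1)
  have nz: "0 \<notin> S" using n1 by fastforce
  have indS: "independent S" by (rule pairwise_orthogonal_independent[OF poS nz])
  have spS: "span S = UNIV"
  proof -
    { fix x :: "real^'n"
      define y where "y = x - (\<Sum>i\<in>I. (u i \<bullet> x) *\<^sub>R u i)"
      have "u j \<bullet> y = 0" if "j \<in> I" for j
      proof -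
        have "u j \<bullet> (\<Sum>i\<in>I. (u i \<bullet> x) *\<^sub>R u i) = (\<Sum>i\<in>I. (u i \<bullet> x) * (u i \<bullet> u j))"
          by (simp add: inner_sum_right inner_commute)
        also have "\<dots> = u j \<bullet> x" using sum_delta_inner[OF on fin that] .
        finally show ?thesis by (simp add: y_def inner_diff_right)
      qed
      hence "y \<in> W" unfolding W_def by blast
      hence "y \<in> span S" using B(5) span_mono[of B S] unfolding S_def by blast
      moreover have "(\<Sum>i\<in>I. (u i \<bullet> x) *\<^sub>R u i) \<in> span S"
        by (intro span_sum span_mul span_base) (auto simp: S_def)
      ultimately have "x \<in> span S" using span_add unfolding y_def by fastforce }
    thus ?thesis by auto
  qed
  have finS: "finite S" using indS by (simp add: independent_imp_finite)
  have cardS: "card S = CARD('n)"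
    using indS spS by (metis dim_eq_card_independent dim_eq_full DIM_cart DIM_real mult_1_right)
  obtain f where f: "bij_betw f (UNIV::'n set) S"
    using finite_same_card_bij[OF finite_class.finite_UNIV finS] cardS by auto
  hence injf: "inj f" and rf: "range f = S" by (auto simp: bij_betw_def)
  define p where "p i = inv f (u i)" for i
  have bp: "f (p i) = u i" if "i \<in> I" for i
    unfolding p_def using rf that S_def by (simp add: f_inv_into_f)
  show ?thesis
  proof
    fix i j
    show "f i \<bullet> f j = (if i = j then 1 else 0)"
    proof (cases "i = j")
      case True
      thus ?thesis using n1 rf by (auto simp: norm_eq_1)
    next
      case False
      hence "f i \<noteq> f j" using injf by (auto simp: inj_def)
      thus ?thesis using poS rf False unfolding pairwise_def orthogonal_def by auto
    qed
  next
    show "inj_on p I" unfolding inj_on_def using bp injU by (metis inj_onD)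
  next
    fix i assume "i \<in> I" thus "f (p i) = u i" by (rule bp)
  next
    fix j i assume j: "j \<notin> p ` I" and i: "i \<in> I"
    have "f j \<notin> u ` I"
    proof
      assume "f j \<in> u ` I"
      then obtain m where m: "m \<in> I" "f j = u m" by blast
      hence "f j = f (p m)" using bp by simp
      hence "j = p m" using injf by (simp add: inj_def)
      thus False using j m by blast
    qed
    hence "f j \<in> B" using rf S_def by blast
    thus "u i \<bullet> f j = 0" using B(1) i unfolding W_def by blast
  qed
qed

lemma sum_mset_const: "finite A \<Longrightarrow> (\<Sum>x\<in>A. {#c#}) = replicate_mset (card A) c"
  by (induction A rule: finite_induct) auto

lemma sum_mset_upto: "(\<Sum>i\<in>{1..r}. {#d i#}) = mset (map d [1..<r+1])"
proof (induction r)
  case 0 thus ?case by simp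
next
  case (Suc r)
  have "{1..Suc r} = insert (Suc r) {1..r}" by auto
  thus ?case using Suc by (simp add: add.commute)
qed

lemma eigval_spec:
  fixes u :: "nat \<Rightarrow> real^'n" and d :: "nat \<Rightarrow> real"
  assumes on: "orthonormal_on {1..r} u"
    and dec: "\<forall>i\<in>{1..r}. \<forall>j\<in>{1..r}. i \<le> j \<longrightarrow> d j \<le> d i"
    and nn: "\<forall>i\<in>{1..r}. d i \<ge> 0"
    and k: "k \<in> {1..r}"
  shows "eigval k (\<Sum>i\<in>{1..r}. d i *\<^sub>R outer (u i) (u i)) = d k"
proof -
  define I where "I = {1..r}"
  define A where "A = (\<Sum>i\<in>I. d i *\<^sub>R outer (u i) (u i))"
  have fin: "finite I" by (simp add: I_def)
  have on': "orthonormal_on I u" using on by (simp add: I_def)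
  obtain b :: "'n \<Rightarrow> real^'n" and p where bb: "\<And>i j. b i \<bullet> b j = (if i = j then 1 else 0)"
    and injp: "inj_on p I" and bp: "\<And>i. i \<in> I \<Longrightarrow> b (p i) = u i"
    and bo: "\<And>j i. j \<notin> p ` I \<Longrightarrow> i \<in> I \<Longrightarrow> u i \<bullet> b j = 0"
    using orthonormal_extend[OF on' fin] by metis
  define dd where "dd j = (if j \<in> p ` I then d (inv_into I p j) else 0)" for j
  have ddp: "dd (p i) = d i" if "i \<in> I" for i
    using that injp by (simp add: dd_def)
  have Ab: "A *v b j = dd j *\<^sub>R b j" for j
  proof (cases "j \<in> p ` I")
    case True
    then obtain m where m: "m \<in> I" "j = p m" by blast
    have "A *v b j = (\<Sum>i\<in>I. d i *\<^sub>R (u i \<bullet> u m) *\<^sub>R u i)"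
      by (simp add: A_def mv_sum_left mv_scaleR_left outer_mv bp m)
    also have "\<dots> = d m *\<^sub>R u m"
      using sum_delta_inner'[OF on' fin m(1), of d u] by (simp add: inner_commute)
    finally show ?thesis using m bp ddp by simp
  next
    case False
    have "A *v b j = (\<Sum>i\<in>I. d i *\<^sub>R (u i \<bullet> b j) *\<^sub>R u i)"
      by (simp add: A_def mv_sum_left mv_scaleR_left outer_mv)
    also have "\<dots> = 0" using bo[OF False] by simp
    finally show ?thesis using False by (simp add: dd_def)
  qed
  define Q :: "real^'n^'n" where "Q = (\<chi> i j. b j $ i)"
  have QQ: "transpose Q ** Q = mat 1"
  proof -
    have e: "(transpose Q ** Q) $ i $ j = b i \<bullet> b j" for i j
      using QTMQ_entry[of b "mat 1" i j] by (simp add: Q_def)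
    have "(transpose Q ** Q) $ i $ j = (mat 1 :: real^'n^'n) $ i $ j" for i j
      unfolding e bb by (simp add: mat_def)
    thus ?thesis by (simp add: vec_eq_iff)
  qed
  have detc: "det (mat c - A) = (\<Prod>j\<in>UNIV. c - dd j)" for c
  proof -
    have ent: "(transpose Q ** (mat c - A) ** Q) $ i $ j = (if i = j then c - dd j else 0)" for i j
    proof -
      have "(mat c - A) *v b j = (c - dd j) *\<^sub>R b j"
        using Ab by (simp add: matrix_vector_mult_diff_rdistrib scaleR_diff_left mat_mv)
      thus ?thesis using QTMQ_entry[of b "mat c - A" i j] bb[of i j] by (simp add: Q_def)
    qed
    have "det (mat c - A) = det (transpose Q ** (mat c - A) ** Q)"
      using det_similar[OF QQ] by simp
    also have "\<dots> = (\<Prod>j\<in>UNIV. (transpose Q ** (mat c - A) ** Q) $ j $ j)"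
      by (rule det_diagonal) (simp add: ent)
    finally show ?thesis by (simp add: ent)
  qed
  have cp: "charpoly A = (\<Prod>j\<in>UNIV. [:- dd j, 1:])"
  proof (rule poly_ext)
    fix c show "poly (charpoly A) c = poly (\<Prod>j\<in>UNIV. [:- dd j, 1:]) c"
      by (simp add: charpoly_eval detc poly_prod)
  qed
  have pr: "proots (charpoly A) = (\<Sum>j\<in>UNIV. {#dd j#})"
    unfolding cp by (subst proots_prod) auto
  also have "\<dots> = (\<Sum>j\<in>p ` I. {#dd j#}) + (\<Sum>j\<in>UNIV - p ` I. {#dd j#})"
    by (metis (no_types, lifting) Diff_disjoint Un_Diff_cancel finite Un_UNIV_right sum.union_disjoint)
  also have "(\<Sum>j\<in>p ` I. {#dd j#}) = (\<Sum>i\<in>I. {#d i#})"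
    using injp ddp by (simp add: sum.reindex)
  also have "(\<Sum>j\<in>UNIV - p ` I. {#dd j#}) = (\<Sum>j\<in>UNIV - p ` I. {#0#})"
    by (rule sum.cong) (auto simp: dd_def)
  also have "\<dots> = replicate_mset (CARD('n) - r) 0"
  proof -
    have "card (UNIV - p ` I) = CARD('n) - card (p ` I)" by (simp add: card_Diff_subset)
    also have "card (p ` I) = r" using injp by (simp add: card_image I_def)
    finally show ?thesis by (simp add: sum_mset_const)
  qed
  finally have M0: "proots (charpoly A) = (\<Sum>i\<in>{1..r}. {#d i#}) + replicate_mset (CARD('n) - r) 0"
    by (simp add: I_def)
  define L where "L = replicate (CARD('n) - r) 0 @ rev (map d [1..<r+1])"
  have mL: "mset L = mset (map d [1..<r+1]) + replicate_mset (CARD('n) - r) 0"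
    unfolding L_def mset_append mset_rev mset_replicate by (simp only: add.commute)
  have M: "proots (charpoly A) = mset L"
    unfolding M0 mL sum_mset_upto ..
  have sL: "sorted L"
  proof -
    have "sorted (rev (map d [1..<r+1]))"
    proof (subst sorted_iff_nth_mono_less, intro allI impI)
      fix i j assume ij0: "i < j" and ij1: "j < length (rev (map d [1..<r+1]))"
      have ij: "i < j \<and> j < length (rev (map d [1..<r+1]))" using ij0 ij1 by simp
      hence "j < r" by (simp del: upt_Suc)
      thus "rev (map d [1..<r+1]) ! i \<le> rev (map d [1..<r+1]) ! j"
        using ij dec by (simp add: rev_nth del: upt_Suc)
    qed
    moreover have "\<forall>y\<in>set (rev (map d [1..<r+1])). 0 \<le> y" using nn by (auto simp del: upt_Suc)
    ultimately show ?thesis unfolding L_def by (auto simp: sorted_append)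
  qed
  have "eigval k A = rev L ! (k - 1)"
    unfolding eigval_def M sorted_list_of_multiset_mset sorted_sort_id[OF sL] ..
  also have "\<dots> = d k"
  proof -
    have k1: "k - 1 < r" "1 + (k - 1) = k" using k by auto
    have "rev L = map d [1..<r+1] @ replicate (CARD('n) - r) 0" by (simp add: L_def del: upt_Suc)
    hence "rev L ! (k - 1) = map d [1..<r+1] ! (k - 1)" using k1 by (simp add: nth_append del: upt_Suc)
    also have "\<dots> = d k" using k1 by (simp del: upt_Suc)
    finally show ?thesis .
  qed
  finally show ?thesis by (simp add: A_def I_def)
qed

section \<open>Rank via a containing subspace\<close>

definition maps_into :: "real^'c^'n \<Rightarrow> (real^'n) set \<Rightarrow> bool" where
  "maps_into W V \<longleftrightarrow> (\<forall>x. W *v x \<in> V)"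

lemma rank_le_dim: "maps_into W V \<Longrightarrow> subspace V \<Longrightarrow> rank W \<le> dim V"
  unfolding maps_into_def rank_dim_range
  by (metis dim_subset image_subset_iff)

lemma maps_into_add: "subspace V \<Longrightarrow> maps_into A V \<Longrightarrow> maps_into B V \<Longrightarrow> maps_into (A + B) V"
  unfolding maps_into_def by (simp add: matrix_vector_mult_add_rdistrib subspace_add)

lemma maps_into_diff: "subspace V \<Longrightarrow> maps_into A V \<Longrightarrow> maps_into B V \<Longrightarrow> maps_into (A - B) V"
  unfolding maps_into_def by (simp add: matrix_vector_mult_diff_rdistrib subspace_diff)

lemma maps_into_scale: "subspace V \<Longrightarrow> maps_into A V \<Longrightarrow> maps_into (c *\<^sub>R A) V"
  unfolding maps_into_def by (simp add: mv_scaleR_left subspace_scale)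

lemma maps_into_mult: "maps_into A V \<Longrightarrow> maps_into (A ** B) V"
  unfolding maps_into_def by (metis matrix_vector_mul_assoc)

lemma maps_into_outer: "subspace V \<Longrightarrow> a \<in> V \<Longrightarrow> maps_into (outer a b) V"
  unfolding maps_into_def by (simp add: outer_mv subspace_scale)

lemma maps_into_sum: "subspace V \<Longrightarrow> (\<And>i. i \<in> I \<Longrightarrow> maps_into (A i) V) \<Longrightarrow> maps_into (\<Sum>i\<in>I. A i) V"
  unfolding maps_into_def by (simp add: mv_sum_left subspace_sum)

lemma rank_subspace:
  fixes u :: "nat \<Rightarrow> real^'n" and M :: "real^'n^'n"
  assumes "rank M \<le> r" "card I \<le> r" "finite I"
  obtains V where "subspace V" "dim V \<le> 2 * r" "\<And>i. i \<in> I \<Longrightarrow> u i \<in> V" "maps_into M V"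
proof -
  obtain Bc where Bc: "Bc \<subseteq> columns M" "independent Bc" "columns M \<subseteq> span Bc" "card Bc = dim (columns M)"
    using basis_exists by blast
  have finBc: "finite Bc" using Bc(2) by (simp add: independent_imp_finite)
  define V where "V = span (u ` I \<union> Bc)"
  have "dim V \<le> card (u ` I \<union> Bc)"
    unfolding V_def by (rule dim_le_card) (use finBc assms(3) in auto)
  also have "\<dots> \<le> card (u ` I) + card Bc" by (rule card_Un_le)
  also have "\<dots> \<le> r + r"
    using assms card_image_le[OF assms(3), of u] Bc(4) column_rank_def[of M] by linarith
  finally have d: "dim V \<le> 2 * r" by simp
  have m: "maps_into M V"
    unfolding maps_into_def
  proof
    fix x
    have "M *v x \<in> span (columns M)" by (rule matrix_vector_mult_in_columnspace)
    also have "\<dots> \<subseteq> span Bc" using Bc(3) by (simp add: span_minimal)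
    also have "\<dots> \<subseteq> V" unfolding V_def by (rule span_mono) auto
    finally show "M *v x \<in> V" .
  qed
  show ?thesis
    by (rule that[of V, OF _ d _ m]) (auto simp: V_def span_base)
qed

lemma sum_outer_mult:
  fixes a :: "nat \<Rightarrow> real^'n" and b :: "nat \<Rightarrow> real^'m" and q :: "nat \<Rightarrow> real^'k"
  assumes on: "orthonormal_on I q" and fin: "finite I" and J: "J \<subseteq> I"
  shows "(\<Sum>i\<in>I. outer (a i) (q i)) ** transpose (\<Sum>j\<in>J. outer (b j) (q j)) = (\<Sum>j\<in>J. outer (a j) (b j))"
proof -
  have finJ: "finite J" using J fin finite_subset by blast
  have "(\<Sum>i\<in>I. outer (a i) (q i)) ** transpose (\<Sum>j\<in>J. outer (b j) (q j))
      = (\<Sum>j\<in>J. \<Sum>i\<in>I. (q i \<bullet> q j) *\<^sub>R outer (a i) (b j))"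
    by (simp add: transpose_sum transpose_outer mm_sum_left mm_sum_right outer_mult)
  also have "\<dots> = (\<Sum>j\<in>J. outer (a j) (b j))"
  proof (rule sum.cong[OF refl])
    fix j assume j: "j \<in> J"
    have "(\<Sum>i\<in>I. (q i \<bullet> q j) *\<^sub>R outer (a i) (b j)) = (\<Sum>i\<in>I. if i = j then outer (a j) (b j) else 0)"
      using on j J by (intro sum.cong) (auto simp: orthonormal_on_def)
    thus "(\<Sum>i\<in>I. (q i \<bullet> q j) *\<^sub>R outer (a i) (b j)) = outer (a j) (b j)"
      using fin j J by auto
  qed
  finally show ?thesis .
qed

lemma outer_sum_mult_T:
  fixes a :: "nat \<Rightarrow> real^'n" and T :: "real^'k^'k"
  shows "(\<Sum>i\<in>K. outer (a i) (q i)) ** T = (\<Sum>i\<in>K. outer (a i) (transpose T *v q i))"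
  by (simp add: mm_sum_left outer_mult_right)

lemma mult_sum_outer:
  fixes B :: "real^'n^'m"
  shows "B ** (\<Sum>i\<in>K. outer (a i) (q i)) = (\<Sum>i\<in>K. outer (B *v a i) (q i))"
  by (simp add: mm_sum_right mult_outer)

lemma cross_term_nonneg:
  fixes D P :: "real^'n^'n"
  assumes DT: "transpose D = D" and PT: "transpose P = P" and PP: "P ** P = P"
  defines "W \<equiv> D ** P - (1/2) *\<^sub>R (P ** D ** P)"
  shows "W \<bullet> transpose W \<ge> 0"
proof -
  define F where "F = P ** D ** P"
  have FT: "transpose F = F" unfolding F_def using DT PT by (simp add: matrix_transpose_mul matrix_mul_assoc)
  have WT: "transpose W = P ** D - (1/2) *\<^sub>R F"
    unfolding W_def F_def using DT PT by (simp add: transpose_diff transpose_scaleR matrix_transpose_mul matrix_mul_assoc)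
  have FP: "F ** P = F" unfolding F_def by (simp add: matrix_mul_assoc[symmetric] PP)
  have PF: "P ** F = F" unfolding F_def by (simp add: matrix_mul_assoc PP)
  have i1: "(D ** P) \<bullet> (P ** D) = F \<bullet> D"
    by (simp add: inner_mm_right PT F_def matrix_mul_assoc)
  have i2: "(D ** P) \<bullet> F = F \<bullet> D"
  proof -
    have "(D ** P) \<bullet> F = F \<bullet> (D ** P)" by (simp add: inner_commute)
    also have "\<dots> = (F ** transpose P) \<bullet> D" by (rule inner_mm_left)
    finally show ?thesis by (simp add: PT FP)
  qed
  have i3: "F \<bullet> (P ** D) = F \<bullet> D"
    by (simp add: inner_mm_right PT PF)
  have i4: "F \<bullet> F = F \<bullet> D"
  proof -
    have "F \<bullet> F = F \<bullet> (P ** (D ** P))" by (simp add: F_def matrix_mul_assoc)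
    also have "\<dots> = (P ** F) \<bullet> (D ** P)" by (simp add: inner_mm_right PT)
    also have "\<dots> = (F ** P) \<bullet> D" by (simp add: PF inner_mm_left PT)
    finally show ?thesis by (simp add: FP)
  qed
  have "W \<bullet> transpose W = (D ** P) \<bullet> (P ** D) - (1/2) * ((D ** P) \<bullet> F) - (1/2) * (F \<bullet> (P ** D)) + (1/4) * (F \<bullet> F)"
    unfolding WT unfolding W_def F_def[symmetric]
    by (simp add: inner_diff_left inner_diff_right algebra_simps)
  also have "\<dots> = (1/4) * (F \<bullet> F)" using i1 i2 i3 i4 by simp
  finally have "W \<bullet> transpose W = (1/4) * (F \<bullet> F)" .
  thus ?thesis using inner_ge_zero[of F] by linarith
qed

lemma norm_sym_sum_ge:
  fixes W :: "real^'n^'n"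
  assumes "W \<bullet> transpose W \<ge> 0"
  shows "2 * (norm W)^2 \<le> (norm (W + transpose W))^2"
proof -
  have "(norm (W + transpose W))^2 = W \<bullet> W + 2 * (W \<bullet> transpose W) + transpose W \<bullet> transpose W"
    by (simp add: power2_norm_eq_inner inner_add_left inner_add_right inner_commute)
  also have "transpose W \<bullet> transpose W = W \<bullet> W" by (rule inner_transpose_both)
  finally show ?thesis using assms by (simp add: power2_norm_eq_inner)
qed

lemma transpose_zero[simp]: "transpose (0::real^'c^'r) = 0"
  by (simp add: transpose_def vec_eq_iff)

lemma mm_zero_left[simp]: "(0::real^'k^'r) ** (M::real^'c^'k) = 0"
  by (simp add: matrix_matrix_mult_def vec_eq_iff)

lemma mm_zero_right[simp]: "(M::real^'k^'r) ** (0::real^'c^'k) = 0"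
  by (simp add: matrix_matrix_mult_def vec_eq_iff)

lemma spec_add: "spec I w c + spec I w d = spec I w (\<lambda>i. c i + d i)"
  by (simp add: spec_def sum.distrib[symmetric] scaleR_add_left)

lemma spec_scale: "a *\<^sub>R spec I w c = spec I w (\<lambda>i. a * c i)"
  by (simp add: spec_def scaleR_sum_right)

lemma sum_outer_scale: "(\<Sum>i\<in>I. s i *\<^sub>R outer (a i) (b i)) = (\<Sum>i\<in>I. outer (s i *\<^sub>R a i) (b i))"
  by (simp add: outer_scaleR_left)

lemma spec_as_sum: "spec I w c = (\<Sum>i\<in>I. outer (c i *\<^sub>R w i) (w i))"
  by (simp add: spec_def outer_scaleR_left)

theorem lemma25:
  fixes \<phi> :: "real^'n^'n \<Rightarrow> real"
    and L \<mu> \<eta> :: real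
    and Mstar :: "real^'n^'n"
    and X :: "real^'r^'n"
    and \<sigma> :: "nat \<Rightarrow> real" and u :: "nat \<Rightarrow> real^'n" and v :: "nat \<Rightarrow> real^'r"
  defines "r \<equiv> CARD('r)"
  defines "f \<equiv> (\<lambda>Z::real^'r^'n. \<phi> (Z ** transpose Z))"
  defines "Xk \<equiv> (\<lambda>k. \<Sum>i=1..k. \<sigma> i *\<^sub>R outer (u i) (v i))"
  defines "D \<equiv> X ** transpose X - Mstar"
  defines "\<delta> \<equiv> (L - \<mu>) / (L + \<mu>)"
  defines "cos\<theta> \<equiv> (\<lambda>k. Sup {(D \<bullet> (Xk k ** transpose Y + Y ** transpose (Xk k))) /
                  (norm D * norm (Xk k ** transpose Y + Y ** transpose (Xk k))) | Y::real^'r^'n.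
                  Xk k ** transpose Y + Y ** transpose (Xk k) \<noteq> 0})"
  assumes twice: "twice_differentiable \<phi>"
    and lip: "grad_lipschitz L \<phi>"
    and rsc: "restricted_strongly_convex \<mu> (2 * r) \<phi>"
    and argmin: "\<forall>M. \<phi> Mstar \<le> \<phi> M"
    and Mstar_psd: "psd Mstar"
    and Mstar_rank: "rank Mstar \<le> r"
    and neq: "X ** transpose X \<noteq> Mstar"
    and svd: "X = (\<Sum>i=1..r. \<sigma> i *\<^sub>R outer (u i) (v i))"
    and u_orth: "\<forall>i\<in>{1..r}. \<forall>j\<in>{1..r}. u i \<bullet> u j = (if i = j then 1 else 0)"
    and v_orth: "\<forall>i\<in>{1..r}. \<forall>j\<in>{1..r}. v i \<bullet> v j = (if i = j then 1 else 0)"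
    and \<sigma>_nonneg: "\<forall>i\<in>{1..r}. \<sigma> i \<ge> 0"
    and \<sigma>_dec: "\<forall>i\<in>{1..r}. \<forall>j\<in>{1..r}. i \<le> j \<longrightarrow> \<sigma> j \<le> \<sigma> i"
    and \<eta>_nonneg: "\<eta> \<ge> 0"
    and pd_shift: "pd (transpose X ** X + \<eta> *\<^sub>R mat 1)"
  shows "\<forall>k\<in>{1..r}. 0 < eigval k (X ** transpose X) \<longrightarrow>
           (\<mu> + L) / sqrt 2 * (cos\<theta> k - \<delta>) / sqrt (1 + \<eta> / eigval k (X ** transpose X))
             \<le> dual_local_norm (grad f X) X \<eta> / norm D"
proof (intro ballI impI)
  note r_def = assms(1) and f_def = assms(2) and Xk_def = assms(3) and D_def = assms(4)
    and \<delta>_def = assms(5) and cos_def = assms(6)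
  fix k assume k: "k \<in> {1..r}" and lpos: "0 < eigval k (X ** transpose X)"
  define I where "I = {1..r}"
  define K where "K = {1..k}"
  have finI: "finite I" and finK: "finite K" by (simp_all add: I_def K_def)
  have KI: "K \<subseteq> I" using k by (auto simp: I_def K_def)
  have kK: "k \<in> K" and oneK: "1 \<in> K" using k by (auto simp: K_def)
  have oneI: "1 \<in> I" using KI oneK by blast
  have cardI: "card I = CARD('r)" by (simp add: I_def r_def)
  have onu: "orthonormal_on I u" using u_orth by (simp add: orthonormal_on_def I_def)
  have onv: "orthonormal_on I v" using v_orth by (simp add: orthonormal_on_def I_def)
  have onuK: "orthonormal_on K u" by (rule orthonormal_on_subset[OF onu KI])
  have onvK: "orthonormal_on K v" by (rule orthonormal_on_subset[OF onv KI])
  have uu: "u i \<bullet> u i = 1" if "i \<in> I" for i using onu that by (simp add: orthonormal_on_def)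
  have vv: "v i \<bullet> v i = 1" if "i \<in> I" for i using onv that by (simp add: orthonormal_on_def)

  have Xs: "X = (\<Sum>i\<in>I. outer (\<sigma> i *\<^sub>R u i) (v i))"
    using svd by (simp add: I_def sum_outer_scale)
  have XkS: "Xk k = (\<Sum>i\<in>K. outer (\<sigma> i *\<^sub>R u i) (v i))"
    unfolding Xk_def by (simp add: K_def sum_outer_scale)
  have XXT: "X ** transpose X = spec I u (\<lambda>i. (\<sigma> i)^2)"
    unfolding spec_as_sum
    apply (subst (2) Xs, subst Xs)
    apply (subst sum_outer_mult[OF onv finI order_refl])
    by (simp add: outer_scaleR_left outer_scaleR_right power2_eq_square)
  have XkXkT: "Xk k ** transpose (Xk k) = spec K u (\<lambda>i. (\<sigma> i)^2)"
    unfolding spec_as_sum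
    apply (subst (2) XkS, subst XkS)
    apply (subst sum_outer_mult[OF onvK finK order_refl])
    by (simp add: outer_scaleR_left outer_scaleR_right power2_eq_square)
  have XTs: "transpose X = (\<Sum>i\<in>I. outer (\<sigma> i *\<^sub>R v i) (u i))"
    using Xs by (simp add: transpose_sum transpose_outer transpose_scaleR outer_scaleR_left outer_scaleR_right)
  have XTX: "transpose X ** X = spec I v (\<lambda>i. (\<sigma> i)^2)"
  proof -
    have "transpose X ** X = transpose X ** transpose (transpose X)" by simp
    also have "\<dots> = (\<Sum>i\<in>I. outer (\<sigma> i *\<^sub>R v i) (\<sigma> i *\<^sub>R v i))"
      by (subst (2) XTs, subst XTs, rule sum_outer_mult[OF onu finI order_refl])
    finally show ?thesis unfolding spec_as_sum
      by (simp add: outer_scaleR_left outer_scaleR_right power2_eq_square)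
  qed

  have lam: "eigval k (X ** transpose X) = (\<sigma> k)^2"
  proof -
    have "eigval k (\<Sum>i\<in>{1..r}. (\<sigma> i)^2 *\<^sub>R outer (u i) (u i)) = (\<sigma> k)^2"
    proof (rule eigval_spec)
      show "orthonormal_on {1..r} u" using onu by (simp add: I_def)
      show "\<forall>i\<in>{1..r}. \<forall>j\<in>{1..r}. i \<le> j \<longrightarrow> (\<sigma> j)^2 \<le> (\<sigma> i)^2"
        using \<sigma>_dec \<sigma>_nonneg by (auto intro: power_mono)
      show "\<forall>i\<in>{1..r}. 0 \<le> (\<sigma> i)^2" by simp
      show "k \<in> {1..r}" by (rule k)
    qed
    thus ?thesis using XXT by (simp add: spec_def I_def)
  qed
  have sk: "\<sigma> k > 0"
    using lpos lam \<sigma>_nonneg k by (metis less_eq_real_def power_zero_numeral zero_less_power2)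
  have sK: "\<sigma> i \<ge> \<sigma> k" if "i \<in> K" for i
    using \<sigma>_dec that k KI unfolding K_def I_def by auto
  have sKpos: "\<sigma> i > 0" if "i \<in> K" for i using sK[OF that] sk by linarith

  have matI: "(mat 1 :: real^'r^'r) = spec I v (\<lambda>i. 1)"
    using spec_one[OF onv finI cardI] by simp
  have Qs: "transpose X ** X + \<eta> *\<^sub>R mat 1 = spec I v (\<lambda>i. (\<sigma> i)^2 + \<eta>)"
    unfolding XTX matI spec_scale spec_add by simp
  have cpos: "(\<sigma> i)^2 + \<eta> > 0" if "i \<in> I" for i
  proof -
    have "v i \<noteq> 0" using vv[OF that] by auto
    hence "v i \<bullet> ((transpose X ** X + \<eta> *\<^sub>R mat 1) *v v i) > 0"
      using pd_shift unfolding pd_def by blast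
    also have "(transpose X ** X + \<eta> *\<^sub>R mat 1) *v v i = ((\<sigma> i)^2 + \<eta>) *\<^sub>R v i"
      unfolding Qs by (rule spec_mv[OF onv finI that])
    finally show ?thesis using vv[OF that] by simp
  qed
  define S where "S = spec I v (\<lambda>i. 1 / sqrt ((\<sigma> i)^2 + \<eta>))"
  define T where "T = spec I v (\<lambda>i. sqrt ((\<sigma> i)^2 + \<eta>))"
  have Seq: "inv_sqrt (transpose X ** X + \<eta> *\<^sub>R mat 1) = S"
    unfolding Qs S_def by (rule inv_sqrt_spec[OF onv finI cardI cpos])
  have TS: "T ** S = mat 1"
  proof -
    have "T ** S = spec I v (\<lambda>i. sqrt ((\<sigma> i)^2 + \<eta>) * (1 / sqrt ((\<sigma> i)^2 + \<eta>)))"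
      unfolding T_def S_def by (rule spec_mult[OF onv finI])
    also have "\<dots> = spec I v (\<lambda>i. 1)"
    proof (rule spec_cong)
      fix i assume "i \<in> I"
      hence "(\<sigma> i)^2 + \<eta> > 0" by (rule cpos)
      thus "sqrt ((\<sigma> i)^2 + \<eta>) * (1 / sqrt ((\<sigma> i)^2 + \<eta>)) = 1" by simp
    qed
    finally show ?thesis using matI by simp
  qed
  have dual: "V \<bullet> Y' \<le> dual_local_norm V X \<eta> * norm (Y' ** T)" for V Y' :: "real^'r^'n"
  proof -
    have "V \<bullet> Y' = V \<bullet> ((Y' ** T) ** S)" by (simp add: matrix_mul_assoc[symmetric] TS)
    also have "\<dots> = (V ** transpose S) \<bullet> (Y' ** T)" by (rule inner_mm_left)
    also have "\<dots> = (V ** S) \<bullet> (Y' ** T)" by (simp add: S_def spec_transpose)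
    also have "\<dots> \<le> norm (V ** S) * norm (Y' ** T)" by (rule norm_cauchy_schwarz)
    finally show ?thesis by (simp add: dual_local_norm_def Seq)
  qed

  have d1: "(\<phi> has_derivative (\<lambda>h. grad \<phi> x \<bullet> h)) (at x)" for x
    using twice unfolding twice_differentiable_def by blast
  have d2: "(grad \<phi> has_derivative hess \<phi> x) (at x)" for x
    using twice unfolding twice_differentiable_def hess_def by (simp add: frechet_derivative_works)
  have Hsym: "hess \<phi> x h \<bullet> h' = hess \<phi> x h' \<bullet> h" for x h h'
    by (rule hessian_symmetric[OF d1 d2])
  have Hlin: "linear (hess \<phi> x)" for x
    using has_derivative_bounded_linear[OF d2] bounded_linear.linear by blast
  have lip': "norm (grad \<phi> (M + E) - grad \<phi> M) \<le> L * norm E" for M E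
    using lip unfolding grad_lipschitz_def by blast
  have Hup: "hess \<phi> x w \<bullet> w \<le> L * (norm w)^2" for x w
  proof -
    have "hess \<phi> x w \<bullet> w \<le> norm (hess \<phi> x w) * norm w" by (rule norm_cauchy_schwarz)
    also have "\<dots> \<le> L * norm w * norm w"
      by (rule mult_right_mono[OF hessian_norm_bound[OF d2 lip'] norm_ge_zero])
    finally show ?thesis by (simp add: power2_eq_square mult.assoc)
  qed
  have Hlo: "rank M \<le> 2 * r \<Longrightarrow> rank E \<le> 2 * r \<Longrightarrow> hess \<phi> M E \<bullet> E \<ge> \<mu> * (norm E)^2" for M E
    using rsc unfolding restricted_strongly_convex_def by blast
  have g0: "grad \<phi> Mstar = 0"
    by (rule grad_zero_at_min[OF d1 argmin])

  obtain V where sV: "subspace V" and dV: "dim V \<le> 2 * r" and uV: "\<And>i. i \<in> I \<Longrightarrow> u i \<in> V"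
    and MV: "maps_into Mstar V"
    using rank_subspace[OF Mstar_rank, of I u] cardI finI r_def by auto
  have rankV: "rank W \<le> 2 * r" if "maps_into W V" for W :: "real^'n^'n"
    using rank_le_dim[OF that sV] dV by linarith
  have specV: "maps_into (spec J u c) V" if "J \<subseteq> I" for J c
    unfolding spec_def
    by (intro maps_into_sum[OF sV] maps_into_scale[OF sV] maps_into_outer[OF sV]) (use that uV in auto)
  have XXTV: "maps_into (X ** transpose X) V" unfolding XXT by (rule specV) simp
  have DV: "maps_into D V" unfolding D_def by (rule maps_into_diff[OF sV XXTV MV])

  define E1 where "E1 = outer (u 1) (u 1)"
  have nu1: "norm (u 1) = 1" using uu[OF oneI] by (simp add: norm_eq_1)
  have nE1: "norm E1 = 1" using nu1 by (simp add: E1_def norm_outer)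
  have E1V: "maps_into E1 V" unfolding E1_def by (rule maps_into_outer[OF sV uV[OF oneI]])
  have "norm (grad \<phi> (0 + E1) - grad \<phi> 0) \<le> L" using lip'[of 0 E1] nE1 by simp
  hence L0: "L \<ge> 0" using norm_ge_zero[of "grad \<phi> (0 + E1) - grad \<phi> 0"] by linarith
  have muL: "\<mu> \<le> L"
    using Hlo[of 0 E1] rankV[OF E1V] Hup[of 0 E1] nE1 by simp

  have Dnz: "D \<noteq> 0" using neq by (simp add: D_def)
  have nD: "norm D > 0" using Dnz by simp
  have MT: "transpose Mstar = Mstar" using Mstar_psd by (simp add: psd_def)
  have DT: "transpose D = D"
    by (simp add: D_def transpose_diff MT matrix_transpose_mul)

  define P where "P = spec K u (\<lambda>i. 1)"
  have PT: "transpose P = P" by (simp add: P_def spec_transpose)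
  have PP: "P ** P = P" unfolding P_def by (simp add: spec_mult[OF onuK finK])
  have Pu: "P *v u i = u i" if "i \<in> K" for i
    unfolding P_def using spec_mv[OF onuK finK that] by simp
  have PXk: "P ** Xk k = Xk k"
    unfolding XkS mult_sum_outer by (rule sum.cong) (simp_all add: matrix_vector_mult_scaleR Pu)
  have PV: "maps_into (P ** B) V" for B :: "real^'n^'n"
    unfolding P_def by (rule maps_into_mult[OF specV[OF KI]])
  have IPX: "(mat 1 - P) ** Xk k = 0" by (simp add: mm_diff_rdistrib PXk)
  have IPT: "transpose (mat 1 - P) = mat 1 - P" by (simp add: transpose_diff PT)

  define B' where "B' = D - (1/2) *\<^sub>R (P ** D)"
  define W where "W = B' ** P"
  define Z where "Z = W + transpose W"
  have W_eq: "W = D ** P - (1/2) *\<^sub>R (P ** D ** P)"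
    by (simp add: W_def B'_def mm_diff_rdistrib mm_scaleR_left)
  have WT_eq: "transpose W = P ** D - (1/2) *\<^sub>R (P ** D ** P)"
    unfolding W_eq using DT PT by (simp add: transpose_diff transpose_scaleR matrix_transpose_mul matrix_mul_assoc)
  have Z_eq: "Z = D ** P + P ** D - P ** D ** P"
    unfolding Z_def WT_eq unfolding W_eq by (simp add: vec_eq_iff algebra_simps)
  define C where "C = (mat 1 - P) ** D ** (mat 1 - P)"
  have DC: "D = C + Z"
    unfolding C_def Z_eq by (simp add: mm_diff_rdistrib mm_diff_ldistrib matrix_mul_assoc algebra_simps)
  have Corth: "C \<bullet> (Xk k ** transpose Y' + Y' ** transpose (Xk k)) = 0" for Y'
  proof -
    have a: "transpose (Xk k) ** C = 0"
    proof -
      have "transpose (Xk k) ** (mat 1 - P) = transpose ((mat 1 - P) ** Xk k)"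
        by (simp add: matrix_transpose_mul IPT)
      thus ?thesis unfolding C_def by (simp add: matrix_mul_assoc IPX)
    qed
    have b: "C ** Xk k = 0"
      unfolding C_def by (simp add: matrix_mul_assoc[symmetric] IPX)
    have "C \<bullet> (Xk k ** transpose Y') = 0"
      by (simp add: inner_mm_right a)
    moreover have "C \<bullet> (Y' ** transpose (Xk k)) = 0"
      by (simp add: inner_mm_left b)
    ultimately show ?thesis by (simp add: inner_add_right)
  qed

  define Y where "Y = (\<Sum>i\<in>K. outer ((1 / \<sigma> i) *\<^sub>R (B' *v u i)) (v i))"
  have Wsum: "W = (\<Sum>i\<in>K. outer (B' *v u i) (u i))"
    unfolding W_def P_def spec_as_sum mult_sum_outer by simp
  have WTsum: "transpose W = (\<Sum>i\<in>K. outer (u i) (B' *v u i))"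
    unfolding Wsum by (simp add: transpose_sum transpose_outer)
  have XYT: "X ** transpose Y = transpose W"
  proof -
    have "X ** transpose Y = (\<Sum>j\<in>K. outer (\<sigma> j *\<^sub>R u j) ((1 / \<sigma> j) *\<^sub>R (B' *v u j)))"
      unfolding Y_def by (subst Xs, rule sum_outer_mult[OF onv finI KI])
    also have "\<dots> = (\<Sum>j\<in>K. outer (u j) (B' *v u j))"
    proof (rule sum.cong[OF refl])
      fix j assume "j \<in> K"
      hence "\<sigma> j \<noteq> 0" using sKpos by force
      thus "outer (\<sigma> j *\<^sub>R u j) ((1 / \<sigma> j) *\<^sub>R (B' *v u j)) = outer (u j) (B' *v u j)"
        by (simp add: outer_scaleR_left outer_scaleR_right)
    qed
    finally show ?thesis using WTsum by simp
  qed
  have XkYT: "Xk k ** transpose Y = transpose W"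
  proof -
    have "Xk k ** transpose Y = (\<Sum>j\<in>K. outer (\<sigma> j *\<^sub>R u j) ((1 / \<sigma> j) *\<^sub>R (B' *v u j)))"
      unfolding Y_def by (subst XkS, rule sum_outer_mult[OF onvK finK order_refl])
    also have "\<dots> = (\<Sum>j\<in>K. outer (u j) (B' *v u j))"
    proof (rule sum.cong[OF refl])
      fix j assume "j \<in> K"
      hence "\<sigma> j \<noteq> 0" using sKpos by force
      thus "outer (\<sigma> j *\<^sub>R u j) ((1 / \<sigma> j) *\<^sub>R (B' *v u j)) = outer (u j) (B' *v u j)"
        by (simp add: outer_scaleR_left outer_scaleR_right)
    qed
    finally show ?thesis using WTsum by simp
  qed
  have YXT: "Y ** transpose X = W"
    using arg_cong[OF XYT, of transpose] by (simp add: matrix_transpose_mul)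
  have YXkT: "Y ** transpose (Xk k) = W"
    using arg_cong[OF XkYT, of transpose] by (simp add: matrix_transpose_mul)
  have ZT: "Z = Xk k ** transpose Y + Y ** transpose (Xk k)"
    unfolding Z_def XkYT YXkT by (simp add: add.commute)
  have ZX: "X ** transpose Y + Y ** transpose X = Z"
    unfolding Z_def XYT YXT by (simp add: add.commute)
  have DZ: "D \<bullet> Z = (norm Z)^2"
    using Corth[of Y] unfolding ZT[symmetric]
    by (subst DC) (simp add: inner_add_left power2_norm_eq_inner)

  define SS where "SS = {(D \<bullet> (Xk k ** transpose Y' + Y' ** transpose (Xk k))) /
                  (norm D * norm (Xk k ** transpose Y' + Y' ** transpose (Xk k))) | Y'::real^'r^'n.
                  Xk k ** transpose Y' + Y' ** transpose (Xk k) \<noteq> 0}"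
  have cos_eq: "cos\<theta> k = Sup SS" unfolding cos_def SS_def by simp
  have SS_ne: "SS \<noteq> {}"
  proof -
    have "(Xk k ** transpose (Xk k)) *v u 1 = (\<sigma> 1)^2 *\<^sub>R u 1"
      unfolding XkXkT by (rule spec_mv[OF onuK finK oneK])
    moreover have "(\<sigma> 1)^2 *\<^sub>R u 1 \<noteq> 0" using sKpos[OF oneK] uu[OF oneI] by auto
    ultimately have "Xk k ** transpose (Xk k) \<noteq> 0" by auto
    moreover have "Xk k ** transpose (Xk k) + Xk k ** transpose (Xk k) = (2::real) *\<^sub>R (Xk k ** transpose (Xk k))"
      by (simp add: scaleR_2)
    ultimately have "Xk k ** transpose (Xk k) + Xk k ** transpose (Xk k) \<noteq> 0"
      by simp
    thus ?thesis unfolding SS_def by blast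
  qed
  have SS_bnd: "-1 \<le> s \<and> s \<le> 1" if sS: "s \<in> SS" for s
  proof -
    obtain Y' where s: "s = (D \<bullet> (Xk k ** transpose Y' + Y' ** transpose (Xk k))) /
                  (norm D * norm (Xk k ** transpose Y' + Y' ** transpose (Xk k)))"
      and nz: "Xk k ** transpose Y' + Y' ** transpose (Xk k) \<noteq> 0"
      using sS unfolding SS_def by blast
    define W' where "W' = Xk k ** transpose Y' + Y' ** transpose (Xk k)"
    have p: "norm D * norm W' > 0" using nz nD by (simp add: W'_def)
    have "\<bar>D \<bullet> W'\<bar> \<le> norm D * norm W'" by (rule Cauchy_Schwarz_ineq2)
    hence "\<bar>s\<bar> \<le> 1" using p unfolding s W'_def[symmetric] by (simp add: abs_div divide_le_eq_1)
    thus ?thesis by linarith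
  qed
  have bddSS: "bdd_above SS"
  proof (rule bdd_aboveI)
    fix s assume "s \<in> SS" thus "s \<le> 1" using SS_bnd by blast
  qed
  have cos_ge: "cos\<theta> k \<ge> -1"
  proof -
    obtain s where "s \<in> SS" using SS_ne by blast
    hence "-1 \<le> s" using SS_bnd by blast
    thus ?thesis unfolding cos_eq using cSup_upper2[OF \<open>s \<in> SS\<close> _ bddSS] by blast
  qed
  have cos_le: "cos\<theta> k \<le> norm Z / norm D"
    unfolding cos_eq
  proof (rule cSup_least[OF SS_ne])
    fix s assume "s \<in> SS"
    then obtain Y' where s: "s = (D \<bullet> (Xk k ** transpose Y' + Y' ** transpose (Xk k))) /
                  (norm D * norm (Xk k ** transpose Y' + Y' ** transpose (Xk k)))"
      and nz: "Xk k ** transpose Y' + Y' ** transpose (Xk k) \<noteq> 0"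
      unfolding SS_def by blast
    define W' where "W' = Xk k ** transpose Y' + Y' ** transpose (Xk k)"
    have p: "norm W' > 0" using nz by (simp add: W'_def)
    have "D \<bullet> W' = Z \<bullet> W'"
      using Corth[of Y'] unfolding W'_def[symmetric] by (subst DC) (simp add: inner_add_left)
    also have "\<dots> \<le> norm Z * norm W'" by (rule norm_cauchy_schwarz)
    finally have "D \<bullet> W' \<le> norm Z * norm W'" .
    moreover have "norm Z / norm D * (norm D * norm W') = norm Z * norm W'" using nD by simp
    moreover have "norm D * norm W' > 0" using p nD by simp
    ultimately have "(D \<bullet> W') / (norm D * norm W') \<le> norm Z / norm D"
      by (simp add: pos_divide_le_eq)
    thus "s \<le> norm Z / norm D" unfolding s W'_def[symmetric] .
  qed

  define lhs where "lhs = (\<mu> + L) / sqrt 2 * (cos\<theta> k - \<delta>) / sqrt (1 + \<eta> / eigval k (X ** transpose X))"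
  define a where "a = dual_local_norm (grad f X) X \<eta>"
  have a0: "a \<ge> 0" by (simp add: a_def dual_local_norm_def)
  have rhs0: "a / norm D \<ge> 0" using a0 nD by simp
  define q where "q = sqrt (1 + \<eta> / (\<sigma> k)^2)"
  have q: "q > 0" using \<eta>_nonneg sk by (simp add: q_def add_pos_nonneg)
  have lhs_eq: "lhs = (\<mu> + L) / sqrt 2 * (cos\<theta> k - \<delta>) / q" by (simp add: lhs_def q_def lam)
  show "(\<mu> + L) / sqrt 2 * (cos\<theta> k - \<delta>) / sqrt (1 + \<eta> / eigval k (X ** transpose X))
             \<le> dual_local_norm (grad f X) X \<eta> / norm D"
    unfolding lhs_def[symmetric] a_def[symmetric]
  proof (cases "\<mu> + L > 0")
    case False
    have "(\<mu> + L) * (cos\<theta> k - \<delta>) \<le> 0"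
    proof (cases "\<mu> + L = 0")
      case True thus ?thesis by simp
    next
      case False
      hence neg: "\<mu> + L < 0" using \<open>\<not> \<mu> + L > 0\<close> by simp
      have "\<delta> \<le> -1" unfolding \<delta>_def using neg L0 by (simp add: divide_le_eq)
      hence "cos\<theta> k - \<delta> \<ge> 0" using cos_ge by linarith
      thus ?thesis using neg by (simp add: mult_nonpos_nonneg)
    qed
    hence "lhs \<le> 0" unfolding lhs_eq using q by (simp add: divide_nonpos_pos)
    thus "lhs \<le> a / norm D" using rhs0 by linarith
  next
    case True
    hence mL: "\<mu> + L > 0" .
    have \<delta>0: "\<delta> \<ge> 0" unfolding \<delta>_def using muL mL by simp
    define cZ where "cZ = norm Z / norm D"
    have lhs_le: "lhs \<le> (\<mu> + L) / sqrt 2 * (cZ - \<delta>) / q"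
      unfolding lhs_eq cZ_def using cos_le mL q
      by (simp add: divide_right_mono mult_left_mono)
    show "lhs \<le> a / norm D"
    proof (cases "cZ \<le> \<delta>")
      case True
      have "(\<mu> + L) / sqrt 2 * (cZ - \<delta>) / q \<le> 0"
        using True mL q by (simp add: divide_nonpos_pos mult_nonneg_nonpos)
      thus ?thesis using lhs_le rhs0 by linarith
    next
      case False
      hence cZd: "cZ > \<delta>" by simp
      hence Znz: "Z \<noteq> 0" using \<delta>0 by (auto simp: cZ_def)
      hence nZ: "norm Z > 0" by simp
      define G where "G = grad \<phi> (X ** transpose X)"
      define \<gamma> where "\<gamma> t = grad \<phi> (Mstar + t *\<^sub>R D) \<bullet> Z" for t
      have der: "(\<gamma> has_derivative (\<lambda>dt. hess \<phi> (Mstar + t *\<^sub>R D) (dt *\<^sub>R D) \<bullet> Z)) (at t)" for t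
      proof -
        have l: "((\<lambda>t. Mstar + t *\<^sub>R D) has_derivative (\<lambda>dt. dt *\<^sub>R D)) (at t)"
          by (auto intro!: derivative_eq_intros)
        show ?thesis unfolding \<gamma>_def
          by (rule bounded_linear.has_derivative[OF bounded_linear_inner_left has_derivative_compose[OF l d2]])
      qed
      have cont: "continuous_on {0..1} \<gamma>"
        using der by (meson continuous_at_imp_continuous_on has_derivative_continuous)
      obtain \<xi> where \<xi>: "0 < \<xi>" "\<xi> < 1"
        and mv: "\<gamma> 1 - \<gamma> 0 = hess \<phi> (Mstar + \<xi> *\<^sub>R D) ((1 - 0) *\<^sub>R D) \<bullet> Z"
        using mvt[OF zero_less_one cont der] by blast
      define H where "H = hess \<phi> (Mstar + \<xi> *\<^sub>R D)"
      have GZ: "G \<bullet> Z = H D \<bullet> Z"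
        using mv g0 by (simp add: \<gamma>_def G_def H_def D_def)
      have ZV: "maps_into Z V"
        unfolding Z_eq
        by (intro maps_into_add[OF sV] maps_into_diff[OF sV] maps_into_mult[OF DV] PV maps_into_mult[OF PV])
      have MxV: "maps_into (Mstar + \<xi> *\<^sub>R D) V"
        by (intro maps_into_add[OF sV MV] maps_into_scale[OF sV DV])
      have pV: "maps_into (D /\<^sub>R norm D + Z /\<^sub>R norm Z) V"
        by (intro maps_into_add[OF sV] maps_into_scale[OF sV DV] maps_into_scale[OF sV ZV])
      have pol: "2 * (H D \<bullet> Z) \<ge> (\<mu> + L) * (D \<bullet> Z) + (\<mu> - L) * (norm D * norm Z)"
        unfolding H_def
      proof (rule polarization_bound[OF Hlin Hsym Dnz Znz])
        show "\<mu> * (norm (D /\<^sub>R norm D + Z /\<^sub>R norm Z))^2 \<le>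
            hess \<phi> (Mstar + \<xi> *\<^sub>R D) (D /\<^sub>R norm D + Z /\<^sub>R norm Z) \<bullet> (D /\<^sub>R norm D + Z /\<^sub>R norm Z)"
          by (rule Hlo[OF rankV[OF MxV] rankV[OF pV]])
        show "hess \<phi> (Mstar + \<xi> *\<^sub>R D) (D /\<^sub>R norm D - Z /\<^sub>R norm Z) \<bullet> (D /\<^sub>R norm D - Z /\<^sub>R norm Z)
            \<le> L * (norm (D /\<^sub>R norm D - Z /\<^sub>R norm Z))^2"
          by (rule Hup)
      qed
      have GZb: "G \<bullet> Z \<ge> (\<mu> + L) / 2 * (norm D * norm Z) * (cZ - \<delta>)"
      proof -
        have e1: "(norm D * norm Z) * cZ = (norm Z)^2"
          using nD unfolding cZ_def by (simp add: power2_eq_square)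
        have e2: "(\<mu> + L) * \<delta> = L - \<mu>"
          using mL unfolding \<delta>_def by (simp add: add.commute)
        have "(\<mu> + L) * (norm D * norm Z) * (cZ - \<delta>) = (\<mu> + L) * ((norm D * norm Z) * cZ) - ((\<mu> + L) * \<delta>) * (norm D * norm Z)"
          by (simp add: algebra_simps)
        also have "\<dots> = (\<mu> + L) * (norm Z)^2 - (L - \<mu>) * (norm D * norm Z)"
          unfolding e1 e2 ..
        finally have "(\<mu> + L) * (norm D * norm Z) * (cZ - \<delta>) = (\<mu> + L) * (norm Z)^2 - (L - \<mu>) * (norm D * norm Z)" .
        thus ?thesis using pol GZ DZ by (simp add: algebra_simps)
      qed
      have gfY: "grad f X \<bullet> Y = G \<bullet> Z"
        unfolding f_def G_def using grad_f[OF d1, of X Y] ZX by simp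
      have YT: "Y ** T = (\<Sum>i\<in>K. outer ((sqrt ((\<sigma> i)^2 + \<eta>) / \<sigma> i) *\<^sub>R (B' *v u i)) (v i))"
      proof -
        have "Y ** T = (\<Sum>i\<in>K. outer ((1 / \<sigma> i) *\<^sub>R (B' *v u i)) (transpose T *v v i))"
          unfolding Y_def by (rule outer_sum_mult_T)
        also have "\<dots> = (\<Sum>i\<in>K. outer ((sqrt ((\<sigma> i)^2 + \<eta>) / \<sigma> i) *\<^sub>R (B' *v u i)) (v i))"
        proof (rule sum.cong[OF refl])
          fix i assume i: "i \<in> K"
          have "transpose T *v v i = sqrt ((\<sigma> i)^2 + \<eta>) *\<^sub>R v i"
            unfolding T_def spec_transpose using KI i by (simp add: spec_mv[OF onv finI] subsetD)
          thus "outer ((1 / \<sigma> i) *\<^sub>R (B' *v u i)) (transpose T *v v i) =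
                outer ((sqrt ((\<sigma> i)^2 + \<eta>) / \<sigma> i) *\<^sub>R (B' *v u i)) (v i)"
            by (simp add: outer_scaleR_left outer_scaleR_right)
        qed
        finally show ?thesis .
      qed
      have nYT: "(norm (Y ** T))^2 \<le> q^2 * (norm W)^2"
      proof -
        have "(norm (Y ** T))^2 = (\<Sum>i\<in>K. (norm ((sqrt ((\<sigma> i)^2 + \<eta>) / \<sigma> i) *\<^sub>R (B' *v u i)))^2)"
          unfolding YT by (rule norm_sum_outer[OF onvK finK])
        also have "\<dots> \<le> (\<Sum>i\<in>K. q^2 * (norm (B' *v u i))^2)"
        proof (rule sum_mono)
          fix i assume i: "i \<in> K"
          have si: "\<sigma> i > 0" by (rule sKpos[OF i])
          have c: "(sqrt ((\<sigma> i)^2 + \<eta>) / \<sigma> i)^2 = 1 + \<eta> / (\<sigma> i)^2"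
            using si \<eta>_nonneg by (simp add: power_divide field_simps add_nonneg_nonneg)
          have "\<eta> / (\<sigma> i)^2 \<le> \<eta> / (\<sigma> k)^2"
            using sK[OF i] sk \<eta>_nonneg by (intro divide_left_mono power_mono) auto
          hence "(sqrt ((\<sigma> i)^2 + \<eta>) / \<sigma> i)^2 \<le> q^2"
            using c \<eta>_nonneg sk by (simp add: q_def add_nonneg_nonneg)
          hence le: "(sqrt ((\<sigma> i)^2 + \<eta>) / \<sigma> i)^2 * (norm (B' *v u i))^2 \<le> q^2 * (norm (B' *v u i))^2"
            by (rule mult_right_mono) simp
          have "(norm ((sqrt ((\<sigma> i)^2 + \<eta>) / \<sigma> i) *\<^sub>R (B' *v u i)))^2
              = (sqrt ((\<sigma> i)^2 + \<eta>) / \<sigma> i)^2 * (norm (B' *v u i))^2"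
            by (simp only: norm_scaleR power_mult_distrib power2_abs)
          thus "(norm ((sqrt ((\<sigma> i)^2 + \<eta>) / \<sigma> i) *\<^sub>R (B' *v u i)))^2 \<le> q^2 * (norm (B' *v u i))^2"
            using le by simp
        qed
        also have "\<dots> = q^2 * (norm W)^2"
          unfolding Wsum norm_sum_outer[OF onuK finK] by (simp add: sum_distrib_left)
        finally show ?thesis .
      qed
      have nW: "2 * (norm W)^2 \<le> (norm Z)^2"
        unfolding Z_def by (rule norm_sym_sum_ge, unfold W_eq, rule cross_term_nonneg[OF DT PT PP])
      have yb: "norm (Y ** T) * sqrt 2 \<le> q * norm Z"
      proof -
        have "(norm (Y ** T) * sqrt 2)^2 = 2 * (norm (Y ** T))^2" by (simp add: power_mult_distrib)
        also have "\<dots> \<le> 2 * (q^2 * (norm W)^2)" using nYT by simp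
        also have "\<dots> = q^2 * (2 * (norm W)^2)" by simp
        also have "\<dots> \<le> q^2 * (norm Z)^2" by (rule mult_left_mono[OF nW]) simp
        also have "\<dots> = (q * norm Z)^2" by (simp add: power_mult_distrib)
        finally have "(norm (Y ** T) * sqrt 2)^2 \<le> (q * norm Z)^2" .
        thus ?thesis by (rule power2_le_imp_le) (use q in simp)
      qed
      have t0: "cZ - \<delta> > 0" using cZd by simp
      have "(\<mu> + L) / 2 * (norm D * norm Z) * (cZ - \<delta>) \<le> a * norm (Y ** T)"
        using GZb gfY dual[of "grad f X" Y] by (simp add: a_def)
      also have "\<dots> * sqrt 2 \<le> a * (q * norm Z)"
        using yb a0 by (simp add: mult.assoc mult_left_mono)
      finally have comb: "(\<mu> + L) / 2 * (norm D * norm Z) * (cZ - \<delta>) * sqrt 2 \<le> a * q * norm Z"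
        by (simp add: mult.assoc mult_right_mono)
      hence "(\<mu> + L) / 2 * norm D * (cZ - \<delta>) * sqrt 2 \<le> a * q"
        using nZ by (simp add: mult.commute mult.left_commute mult_le_cancel_left_pos)
      moreover have "(\<mu> + L) / sqrt 2 * (cZ - \<delta>) * norm D = (\<mu> + L) / 2 * norm D * (cZ - \<delta>) * sqrt 2"
      proof -
        have h: "2 / sqrt 2 = sqrt (2::real)" by (rule real_div_sqrt) simp
        have "(\<mu> + L) / sqrt 2 = (\<mu> + L) / 2 * (2 / sqrt 2)" by (simp add: field_simps)
        hence hh: "(\<mu> + L) / sqrt 2 = (\<mu> + L) / 2 * sqrt 2" unfolding h .
        show ?thesis unfolding hh by (simp only: mult_ac)
      qed
      ultimately have "(\<mu> + L) / sqrt 2 * (cZ - \<delta>) * norm D \<le> a * q"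
        by linarith
      hence "(\<mu> + L) / sqrt 2 * (cZ - \<delta>) / q \<le> a / norm D"
        using q nD by (simp add: field_simps)
      thus ?thesis using lhs_le by linarith
    qed
  qed
qed

end
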